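(* Let $U\subset\mathbb R^d$ be open and bounded and let $\phi^\lambda:\Sigma\to\mathbb R$, $\lambda\in\overline U$, be potentials satisfying (H1) and (H2). For $\lambda\in\overline U$ let $h_\lambda\in\Lambda$ and the probability measure $\nu_\lambda$ be the unique pair with $L_\lambda h_\lambda=e^{P(\phi^\lambda)}h_\lambda$, $L_\lambda^*\nu_\lambda=e^{P(\phi^\lambda)}\nu_\lambda$, $\int h_\lambda d\nu_\lambda=1$. Then for every $0<\theta'<\theta$ there exists $c_{\theta'}>0$ such that for all $\lambda,\lambda'\in U$: $$\frac{h_\lambda(\omega)}{h_{\lambda'}(\omega)}\le e^{c_{\theta'}|\lambda-\lambda'|^{\theta'}}\ \text{for all }\omega\in\Sigma,\qquad \frac{\nu_\lambda([\omega])}{\nu_{\lambda'}([\omega])}\le e^{c_{\theta'}|\lambda-\lambda'|^{\theta'}|\omega|}\ \text{for all finite words }\omega.$$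
   Context: $\mathcal A=\{1,\dots,m\}$, $\Sigma=\mathcal A^{\mathbb N}$ with left shift $\sigma$, $[\omega]$ cylinder, $|\omega|$ length, $|\omega\wedge\tau|$ length of longest common prefix, $i\omega$ the concatenation of symbol $i$ with $\omega$. (H1): there exist $0<\alpha<1$, $b>0$ with $\sup_{\lambda\in\overline U}\sup_{|\omega\wedge\tau|=k}|\phi^\lambda(\omega)-\phi^\lambda(\tau)|\le b\alpha^k$ for all $k$. (H2): there exist $c>0$, $0<\theta<1$ with $\sup_\omega|\phi^\lambda(\omega)-\phi^{\lambda'}(\omega)|\le c|\lambda-\lambda'|^\theta$ for all $\lambda,\lambda'\in\overline U$. Transfer (Perron) operator on continuous functions: $(L_\lambda h)(\omega)=\sum_{i\in\mathcal A}e^{\phi^\lambda(i\omega)}h(i\omega)$. $\Lambda=\{f:\Sigma\to\mathbb R_+: f(\omega)\le\exp(\sum_{k=|\omega\wedge\tau|+1}^\infty2b\alpha^k)f(\tau)\ \forall\omega,\tau\}$. Pressure $P(\phi)=\lim_n\frac1n\log\sum_{\omega\in\mathcal A^n}\exp(\sup_{\mathbf i\in[\omega]}\sum_{\ell<n}\phi(\sigma^\ell\mathbf i))$. *)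

theory Defs
  imports "HOL-Analysis.Analysis" "HOL-Probability.Probability"
begin

text \<open>Symbolic space over the alphabet {1..m}: one-sided sequences indexed from 0,
  carrying the product topology (library instance on function spaces, nat discrete).\<close>
definition Sigma_space :: "nat \<Rightarrow> (nat \<Rightarrow> nat) set" where
  "Sigma_space m = {x. \<forall>n. x n \<in> {1..m}}"

text \<open>Borel measurable structure on Sigma (product sigma algebra = Borel sigma algebra).\<close>
definition Sigma_M :: "nat \<Rightarrow> (nat \<Rightarrow> nat) measure" where
  "Sigma_M m = (\<Pi>\<^sub>M n\<in>UNIV. count_space {1..m})"

definition words :: "nat \<Rightarrow> nat list set" where
  "words m = {w. set w \<subseteq> {1..m}}"

definition cyl :: "nat \<Rightarrow> nat list \<Rightarrow> (nat \<Rightarrow> nat) set" where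
  "cyl m w = {x \<in> Sigma_space m. \<forall>i<length w. x i = w ! i}"

text \<open>Length of the longest common prefix (for distinct sequences).\<close>
definition cpl :: "(nat \<Rightarrow> nat) \<Rightarrow> (nat \<Rightarrow> nat) \<Rightarrow> nat" where
  "cpl x y = (LEAST k. x k \<noteq> y k)"

definition scons :: "nat \<Rightarrow> (nat \<Rightarrow> nat) \<Rightarrow> (nat \<Rightarrow> nat)" where
  "scons i x = (\<lambda>n. case n of 0 \<Rightarrow> i | Suc k \<Rightarrow> x k)"

definition shiftn :: "nat \<Rightarrow> (nat \<Rightarrow> nat) \<Rightarrow> (nat \<Rightarrow> nat)" where
  "shiftn l x = (\<lambda>n. x (n + l))"

definition transfer :: "nat \<Rightarrow> ((nat \<Rightarrow> nat) \<Rightarrow> real) \<Rightarrow> ((nat \<Rightarrow> nat) \<Rightarrow> real) \<Rightarrow> (nat \<Rightarrow> nat) \<Rightarrow> real" where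
  "transfer m phi h x = (\<Sum>i\<in>{1..m}. exp (phi (scons i x)) * h (scons i x))"

definition pressure :: "nat \<Rightarrow> ((nat \<Rightarrow> nat) \<Rightarrow> real) \<Rightarrow> real" where
  "pressure m phi = lim (\<lambda>n. ln (\<Sum>w\<in>{w\<in>words m. length w = n}.
       exp (SUP y\<in>cyl m w. (\<Sum>l<n. phi (shiftn l y)))) / real n)"

definition Lambda_cone :: "nat \<Rightarrow> real \<Rightarrow> real \<Rightarrow> ((nat \<Rightarrow> nat) \<Rightarrow> real) set" where
  "Lambda_cone m b \<alpha> = {f. (\<forall>x\<in>Sigma_space m. 0 \<le> f x) \<and>
     (\<forall>x\<in>Sigma_space m. \<forall>y\<in>Sigma_space m. x \<noteq> y \<longrightarrow>
        f x \<le> exp (\<Sum>j. 2 * b * \<alpha> ^ (cpl x y + 1 + j)) * f y)}"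

end

theory Submission
  imports Defs
begin

lemma space_SM: "space (Sigma_M m) = Sigma_space m"
  by (auto simp: Sigma_M_def Sigma_space_def space_PiM PiE_def Pi_def)

lemma id_meas: "(\<lambda>x. x) \<in> measurable (Sigma_M m) (borel :: (nat \<Rightarrow> nat) measure)"
proof -
  have "(\<lambda>x. x) \<in> measurable (Sigma_M m) (Pi\<^sub>M UNIV (\<lambda>i. borel :: nat measure))"
  proof (rule measurable_PiM_single')
    fix i :: nat
    have "(\<lambda>x. x i) \<in> measurable (Sigma_M m) (count_space {1..m})"
      unfolding Sigma_M_def by (rule measurable_component_singleton) simp
    moreover have "(\<lambda>x::nat. x) \<in> measurable (count_space {1..m}) (borel :: nat measure)"
      by (simp add: measurable_count_space_eq1)
    ultimately show "(\<lambda>x. x i) \<in> measurable (Sigma_M m) borel"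
      by (rule measurable_compose)
  qed (auto simp: space_PiM)
  moreover have "measurable (Sigma_M m) (Pi\<^sub>M UNIV (\<lambda>i. borel :: nat measure)) = measurable (Sigma_M m) (borel :: (nat \<Rightarrow> nat) measure)"
    by (rule measurable_cong_sets[OF refl sets_PiM_equal_borel])
  ultimately show ?thesis by simp
qed

lemma cont_meas:
  assumes "continuous_on (Sigma_space m) f"
  shows "f \<in> borel_measurable (Sigma_M m)"
proof -
  have "(\<lambda>x. x) \<in> measurable (Sigma_M m) (restrict_space borel (Sigma_space m))"
    by (rule measurable_restrict_space2) (auto simp: space_SM id_meas)
  moreover have "f \<in> borel_measurable (restrict_space borel (Sigma_space m))"
    by (rule borel_measurable_continuous_on_restrict[OF assms])
  ultimately show ?thesis by (rule measurable_compose)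
qed

lemma cyl_sets: "cyl m w \<in> sets (Sigma_M m)"
proof -
  have "cyl m w = (\<Inter>i\<in>{..<length w}. {x\<in>space (Sigma_M m). x i = w ! i}) \<inter> space (Sigma_M m)"
    by (auto simp: cyl_def space_SM)
  also have "\<dots> \<in> sets (Sigma_M m)"
  proof -
    have A: "{x\<in>space (Sigma_M m). x i = w ! i} \<in> sets (Sigma_M m)" for i
    proof -
    have "(\<lambda>x. x i) \<in> measurable (Sigma_M m) (count_space {1..m})"
      unfolding Sigma_M_def by (rule measurable_component_singleton) simp
    then have "(\<lambda>x. x i) -` ({w ! i} \<inter> {1..m}) \<inter> space (Sigma_M m) \<in> sets (Sigma_M m)"
      by (rule measurable_sets) simp
    moreover have "(\<lambda>x. x i) -` ({w ! i} \<inter> {1..m}) \<inter> space (Sigma_M m) = {x\<in>space (Sigma_M m). x i = w ! i}"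
      by (auto simp: space_SM Sigma_space_def) (metis atLeastAtMost_iff)+
    ultimately show ?thesis by simp
    qed
    show ?thesis
      by (cases "w = []") (auto intro!: sets.finite_INT sets.Int A)
  qed
  finally show ?thesis .
qed

definition CC :: "nat \<Rightarrow> ((nat \<Rightarrow> nat) \<Rightarrow> real) \<Rightarrow> bool" where
  "CC m f \<longleftrightarrow> (\<forall>x\<in>Sigma_space m. \<forall>e>0. \<exists>N. \<forall>y\<in>Sigma_space m. (\<forall>n<N. y n = x n) \<longrightarrow> \<bar>f y - f x\<bar> < e)"

lemma open_cylN: "open {y::nat\<Rightarrow>nat. \<forall>n<N. y n = x n}"
proof -
  have "{y::nat\<Rightarrow>nat. \<forall>n<N. y n = x n} = (\<Inter>n\<in>{..<N}. (\<lambda>y. y n) -` {x n})" by auto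
  also have "open \<dots>"
    by (intro open_INT finite_lessThan ballI open_vimage) (auto intro: discrete_topology_class.open_discrete)
  finally show ?thesis .
qed

lemma CC_cont: assumes "CC m f" shows "continuous_on (Sigma_space m) f"
  unfolding continuous_on_topological
proof (intro ballI allI impI)
  fix x B assume x: "x \<in> Sigma_space m" and B: "open B" "f x \<in> B"
  then obtain e where e: "e > 0" "\<And>z. dist z (f x) < e \<Longrightarrow> z \<in> B"
    by (meson open_dist)
  from assms x e(1) obtain N where N: "\<forall>y\<in>Sigma_space m. (\<forall>n<N. y n = x n) \<longrightarrow> \<bar>f y - f x\<bar> < e"
    unfolding CC_def by blast
  show "\<exists>A. open A \<and> x \<in> A \<and> (\<forall>y\<in>Sigma_space m. y \<in> A \<longrightarrow> f y \<in> B)"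
    by (rule exI[of _ "{y. \<forall>n<N. y n = x n}"]) (use N e open_cylN in \<open>auto simp: dist_real_def\<close>)
qed

definition conc :: "nat list \<Rightarrow> (nat \<Rightarrow> nat) \<Rightarrow> (nat \<Rightarrow> nat)" where
  "conc w x = (\<lambda>n. if n < length w then w ! n else x (n - length w))"

lemma conc_Nil[simp]: "conc [] x = x" by (simp add: conc_def)

lemma scons_conc: "scons i (conc w x) = conc (i # w) x"
  by (auto simp: scons_def conc_def fun_eq_iff split: nat.splits)

lemma conc_Sigma: "x \<in> Sigma_space m \<Longrightarrow> w \<in> words m \<Longrightarrow> conc w x \<in> Sigma_space m"
  by (auto simp: Sigma_space_def words_def conc_def) (meson atLeastAtMost_iff nth_mem subsetD)+

lemma scons_Sigma: "x \<in> Sigma_space m \<Longrightarrow> i \<in> {1..m} \<Longrightarrow> scons i x \<in> Sigma_space m"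
  by (auto simp: Sigma_space_def scons_def split: nat.splits)

lemma cpl_char:
  assumes "x k \<noteq> y k" "\<And>n. n < k \<Longrightarrow> x n = y n"
  shows "cpl x y = k"
  unfolding cpl_def by (rule Least_equality) (use assms in \<open>auto simp: not_less[symmetric]\<close>)

lemma cpl_props:
  assumes "x \<noteq> y"
  shows "x (cpl x y) \<noteq> y (cpl x y)" "\<And>n. n < cpl x y \<Longrightarrow> x n = y n"
proof -
  from assms obtain k where "x k \<noteq> y k" by auto
  then show "x (cpl x y) \<noteq> y (cpl x y)" unfolding cpl_def by (rule LeastI)
  show "\<And>n. n < cpl x y \<Longrightarrow> x n = y n" unfolding cpl_def using not_less_Least by blast
qed

lemma cpl_ge:
  assumes "x \<noteq> y" "\<forall>n<N. x n = y n"
  shows "N \<le> cpl x y"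
  using cpl_props(1)[OF assms(1)] assms(2) not_le by blast

lemma conc_neq: "x \<noteq> y \<Longrightarrow> conc w x \<noteq> conc w y"
proof
  assume "x \<noteq> y" "conc w x = conc w y"
  then have "\<And>n. x n = y n"
    by (metis (no_types) add_diff_cancel_right' conc_def le_add2 not_less)
  then show False using \<open>x\<noteq>y\<close> by auto
qed

lemma cpl_conc:
  assumes "x \<noteq> y"
  shows "cpl (conc w x) (conc w y) = length w + cpl x y"
proof (rule cpl_char)
  show "conc w x (length w + cpl x y) \<noteq> conc w y (length w + cpl x y)"
    using cpl_props(1)[OF assms] by (simp add: conc_def)
  fix n assume "n < length w + cpl x y"
  then show "conc w x n = conc w y n"
    using cpl_props(2)[OF assms, of "n - length w"] by (auto simp: conc_def)
qed

lemma conc_agree: "\<forall>n<length w. conc w x n = conc w y n"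
  by (simp add: conc_def)

lemma conc_cyl: "x \<in> Sigma_space m \<Longrightarrow> w \<in> words m \<Longrightarrow> conc w x \<in> cyl m w"
  using conc_Sigma[of x m w] by (auto simp: cyl_def) (simp add: conc_def)

definition Kc :: "real \<Rightarrow> real \<Rightarrow> nat \<Rightarrow> real" where
  "Kc b \<alpha> c = 2 * b * \<alpha> ^ (c + 1) / (1 - \<alpha>)"

definition Cone :: "nat \<Rightarrow> real \<Rightarrow> real \<Rightarrow> ((nat \<Rightarrow> nat) \<Rightarrow> real) \<Rightarrow> bool" where
  "Cone m b \<alpha> f \<longleftrightarrow> (\<forall>x\<in>Sigma_space m. 0 < f x) \<and>
     (\<forall>x\<in>Sigma_space m. \<forall>y\<in>Sigma_space m. x \<noteq> y \<longrightarrow> f x \<le> exp (Kc b \<alpha> (cpl x y)) * f y)"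

definition Hol :: "nat \<Rightarrow> real \<Rightarrow> real \<Rightarrow> ((nat \<Rightarrow> nat) \<Rightarrow> real) \<Rightarrow> bool" where
  "Hol m b \<alpha> phi \<longleftrightarrow> (\<forall>x\<in>Sigma_space m. \<forall>y\<in>Sigma_space m. x \<noteq> y \<longrightarrow> \<bar>phi x - phi y\<bar> \<le> b * \<alpha> ^ cpl x y)"

fun Sw :: "((nat \<Rightarrow> nat) \<Rightarrow> real) \<Rightarrow> nat list \<Rightarrow> (nat \<Rightarrow> nat) \<Rightarrow> real" where
  "Sw phi [] x = 0"
| "Sw phi (i # w) x = phi (conc (i # w) x) + Sw phi w x"

definition Wn :: "nat \<Rightarrow> nat \<Rightarrow> nat list set" where
  "Wn m n = {w \<in> words m. length w = n}"

definition Tn :: "nat \<Rightarrow> ((nat \<Rightarrow> nat) \<Rightarrow> real) \<Rightarrow> nat \<Rightarrow> ((nat \<Rightarrow> nat) \<Rightarrow> real) \<Rightarrow> (nat \<Rightarrow> nat) \<Rightarrow> real" where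
  "Tn m phi n f = (transfer m phi ^^ n) f"

lemma Wn_finite: "finite (Wn m n)"
proof -
  have "Wn m n = {xs. set xs \<subseteq> {1..m} \<and> length xs = n}" by (auto simp: Wn_def words_def)
  then show ?thesis by (simp add: finite_lists_length_eq)
qed

lemma Wn_Suc: "Wn m (Suc n) = (\<lambda>(i, w). i # w) ` ({1..m} \<times> Wn m n)"
proof
  show "Wn m (Suc n) \<subseteq> (\<lambda>(i, w). i # w) ` ({1..m} \<times> Wn m n)"
  proof
    fix v assume "v \<in> Wn m (Suc n)"
    then obtain i w where "v = i # w" "i \<in> {1..m}" "w \<in> Wn m n"
      by (cases v) (auto simp: Wn_def words_def)
    then show "v \<in> (\<lambda>(i, w). i # w) ` ({1..m} \<times> Wn m n)"
      by (intro image_eqI[where x="(i, w)"]) auto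
  qed
next
  show "(\<lambda>(i, w). i # w) ` ({1..m} \<times> Wn m n) \<subseteq> Wn m (Suc n)"
  proof
    fix v assume "v \<in> (\<lambda>(i, w). i # w) ` ({1..m} \<times> Wn m n)"
    then obtain p where "p \<in> {1..m} \<times> Wn m n" "v = (\<lambda>(i, w). i # w) p" by blast
    then obtain i w where "v = i # w" "i \<in> {1..m}" "w \<in> Wn m n" by (cases p) auto
    then show "v \<in> Wn m (Suc n)" by (simp add: Wn_def words_def)
  qed
qed

lemma Wn_words: "w \<in> Wn m n \<Longrightarrow> w \<in> words m" by (simp add: Wn_def)

lemma Tn_Suc: "Tn m phi (Suc n) f = Tn m phi n (transfer m phi f)"
  by (simp add: Tn_def funpow_Suc_right del: funpow.simps)

lemma Tn_Suc': "Tn m phi (Suc n) f = transfer m phi (Tn m phi n f)"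
  by (simp add: Tn_def)

lemma Tn_0[simp]: "Tn m phi 0 f = f" by (simp add: Tn_def)

lemma Tn_words:
  "Tn m phi n f x = (\<Sum>w\<in>Wn m n. exp (Sw phi w x) * f (conc w x))"
proof (induction n arbitrary: f)
  case 0
  have "Wn m 0 = {[]}" by (auto simp: Wn_def words_def)
  then show ?case by simp
next
  case (Suc n)
  have "Tn m phi (Suc n) f x = (\<Sum>w\<in>Wn m n. exp (Sw phi w x) * transfer m phi f (conc w x))"
    by (simp add: Tn_Suc Suc.IH)
  also have "\<dots> = (\<Sum>w\<in>Wn m n. \<Sum>i\<in>{1..m}. exp (Sw phi (i # w) x) * f (conc (i # w) x))"
    by (simp add: transfer_def sum_distrib_left scons_conc exp_add mult_ac)
  also have "\<dots> = (\<Sum>(i, w)\<in>{1..m} \<times> Wn m n. exp (Sw phi (i # w) x) * f (conc (i # w) x))"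
    by (subst sum.swap) (simp add: sum.cartesian_product)
  also have "\<dots> = (\<Sum>v\<in>Wn m (Suc n). exp (Sw phi v x) * f (conc v x))"
    unfolding Wn_Suc by (subst sum.reindex) (auto simp: inj_on_def case_prod_beta)
  finally show ?case .
qed

locale ctx =
  fixes m :: nat and b \<alpha> :: real
  assumes m1: "1 \<le> m" and a0: "0 < \<alpha>" and a1: "\<alpha> < 1" and b0: "0 < b"
begin

abbreviation "S \<equiv> Sigma_space m"
abbreviation "K \<equiv> Kc b \<alpha>"
abbreviation "K0 \<equiv> Kc b \<alpha> 0"

lemma K_nonneg: "0 \<le> K c" using a0 a1 b0 by (simp add: Kc_def)

lemma K_mono: assumes "c \<le> c'" shows "K c' \<le> K c"
proof -
  have "\<alpha> ^ (c' + 1) \<le> \<alpha> ^ (c + 1)" using a0 a1 assms by (intro power_decreasing) auto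
  then have "2 * b * \<alpha> ^ (c' + 1) \<le> 2 * b * \<alpha> ^ (c + 1)" using b0 by simp
  then show ?thesis unfolding Kc_def using a1 by (intro divide_right_mono) auto
qed

lemma K_pow: "K c = (2 * b * \<alpha> / (1 - \<alpha>)) * \<alpha> ^ c"
  by (simp add: Kc_def field_simps)

lemma suminf_K: "(\<Sum>j. 2 * b * \<alpha> ^ (c + 1 + j)) = K c"
proof -
  have "(\<lambda>j. 2 * b * \<alpha> ^ (c + 1 + j)) = (\<lambda>j. (2 * b * \<alpha> ^ (c + 1)) * \<alpha> ^ j)"
    by (simp add: power_add mult_ac)
  moreover have "(\<Sum>j. (2 * b * \<alpha> ^ (c + 1)) * \<alpha> ^ j) = (2 * b * \<alpha> ^ (c + 1)) * (1 / (1 - \<alpha>))"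
    by (subst suminf_mult) (use a0 a1 in \<open>auto simp: suminf_geometric\<close>)
  ultimately show ?thesis by (simp add: Kc_def)
qed

lemma S_nonempty: "\<exists>x. x \<in> S"
  using m1 by (intro exI[of _ "\<lambda>_. 1"]) (auto simp: Sigma_space_def)

lemma Lambda_Cone:
  assumes "f \<in> Lambda_cone m b \<alpha>" "x0 \<in> S" "0 < f x0"
  shows "Cone m b \<alpha> f"
proof -
  have le: "f x \<le> exp (K (cpl x y)) * f y" if "x \<in> S" "y \<in> S" "x \<noteq> y" for x y
  proof -
    have "f x \<le> exp (\<Sum>j. 2 * b * \<alpha> ^ (cpl x y + 1 + j)) * f y"
      using assms(1) that unfolding Lambda_cone_def by blast
    then show ?thesis by (simp only: suminf_K)
  qed
  have "0 < f x" if "x \<in> S" for x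
  proof (cases "x = x0")
    case False
    then have "f x0 \<le> exp (K (cpl x0 x)) * f x" using le assms that by auto
    moreover have "0 < exp (K (cpl x0 x))" by simp
    ultimately show ?thesis using assms(3) by (metis less_le_trans zero_less_mult_pos)
  qed (use assms in auto)
  with le show ?thesis by (auto simp: Cone_def)
qed

lemma Cone_pos: "Cone m b \<alpha> f \<Longrightarrow> x \<in> S \<Longrightarrow> 0 < f x" by (simp add: Cone_def)

lemma Cone_agree:
  assumes "Cone m b \<alpha> f" "x \<in> S" "y \<in> S" "\<forall>n<N. x n = y n"
  shows "f x \<le> exp (K N) * f y"
proof (cases "x = y")
  case True
  then show ?thesis using Cone_pos[OF assms(1,3)] K_nonneg[of N] by simp
next
  case False
  then have "f x \<le> exp (K (cpl x y)) * f y" using assms by (auto simp: Cone_def)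
  also have "\<dots> \<le> exp (K N) * f y"
    using K_mono[OF cpl_ge[OF False assms(4)]] Cone_pos[OF assms(1,3)] by simp
  finally show ?thesis .
qed

lemma Cone_le: "Cone m b \<alpha> f \<Longrightarrow> x \<in> S \<Longrightarrow> y \<in> S \<Longrightarrow> f x \<le> exp K0 * f y"
  using Cone_agree[of f x y 0] by simp

lemma Cone_const: "0 < c \<Longrightarrow> Cone m b \<alpha> (\<lambda>_. c)"
  using K_nonneg by (auto simp: Cone_def)

lemma Cone_scale: assumes "Cone m b \<alpha> f" "0 < c" shows "Cone m b \<alpha> (\<lambda>x. c * f x)"
  unfolding Cone_def
proof (intro conjI ballI impI)
  fix x assume "x \<in> S" then show "0 < c * f x" using assms Cone_pos by simp
next
  fix x y assume xy: "x \<in> S" "y \<in> S" "x \<noteq> y"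
  then have "f x \<le> exp (K (cpl x y)) * f y" using assms(1) unfolding Cone_def by blast
  then have "c * f x \<le> c * (exp (K (cpl x y)) * f y)" using assms(2) by simp
  then show "c * f x \<le> exp (K (cpl x y)) * (c * f y)" by (simp add: mult_ac)
qed

lemma Sw_dist:
  assumes "Hol m b \<alpha> phi" "x \<in> S" "y \<in> S" "x \<noteq> y" "w \<in> words m"
  shows "\<bar>Sw phi w x - Sw phi w y\<bar> \<le> b * \<alpha> ^ (cpl x y + 1) * (1 - \<alpha> ^ length w) / (1 - \<alpha>)"
  using assms(5)
proof (induction w)
  case Nil
  then show ?case by simp
next
  case (Cons i w)
  have w: "w \<in> words m" using Cons.prems by (auto simp: words_def)
  have "\<bar>phi (conc (i # w) x) - phi (conc (i # w) y)\<bar> \<le> b * \<alpha> ^ cpl (conc (i # w) x) (conc (i # w) y)"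
    using assms(1) conc_Sigma[OF assms(2) Cons.prems] conc_Sigma[OF assms(3) Cons.prems] conc_neq[OF assms(4)]
    by (auto simp: Hol_def)
  also have "\<dots> = b * \<alpha> ^ (cpl x y + 1) * \<alpha> ^ length w"
    by (simp add: cpl_conc[OF assms(4)] power_add mult_ac)
  finally have 1: "\<bar>phi (conc (i # w) x) - phi (conc (i # w) y)\<bar> \<le> b * \<alpha> ^ (cpl x y + 1) * \<alpha> ^ length w" .
  have "\<bar>Sw phi (i # w) x - Sw phi (i # w) y\<bar>
     \<le> b * \<alpha> ^ (cpl x y + 1) * \<alpha> ^ length w + b * \<alpha> ^ (cpl x y + 1) * (1 - \<alpha> ^ length w) / (1 - \<alpha>)"
    using 1 Cons.IH[OF w] by simp
  also have "\<dots> = b * \<alpha> ^ (cpl x y + 1) * (1 - \<alpha> ^ length (i # w)) / (1 - \<alpha>)"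
    using a1 by (simp add: field_simps)
  finally show ?case .
qed

lemma Sw_dist':
  assumes "Hol m b \<alpha> phi" "x \<in> S" "y \<in> S" "x \<noteq> y" "w \<in> words m"
  shows "\<bar>Sw phi w x - Sw phi w y\<bar> \<le> K (cpl x y) / 2"
proof -
  have "b * \<alpha> ^ (cpl x y + 1) * (1 - \<alpha> ^ length w) / (1 - \<alpha>) \<le> b * \<alpha> ^ (cpl x y + 1) * 1 / (1 - \<alpha>)"
    using a0 a1 b0 by (intro divide_right_mono mult_left_mono) auto
  moreover have "K (cpl x y) / 2 = b * \<alpha> ^ (cpl x y + 1) * 1 / (1 - \<alpha>)" using a1 by (simp add: Kc_def field_simps)
  ultimately show ?thesis using Sw_dist[OF assms] by linarith
qed

lemma Cone_expSw:
  assumes "Hol m b \<alpha> phi" "w \<in> words m"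
  shows "Cone m b \<alpha> (\<lambda>x. exp (Sw phi w x))"
  unfolding Cone_def
proof (intro conjI ballI impI)
  fix x y assume xy: "x \<in> S" "y \<in> S" "x \<noteq> y"
  have "Sw phi w x \<le> K (cpl x y) + Sw phi w y"
    using Sw_dist'[OF assms(1) xy assms(2)] K_nonneg[of "cpl x y"] by linarith
  then show "exp (Sw phi w x) \<le> exp (K (cpl x y)) * exp (Sw phi w y)"
    by (simp add: exp_add[symmetric])
qed simp

lemma Cone_transfer:
  assumes "Hol m b \<alpha> phi" "Cone m b \<alpha> f"
  shows "Cone m b \<alpha> (transfer m phi f)"
  unfolding Cone_def
proof (intro conjI ballI impI)
  fix x assume x: "x \<in> S"
  show "0 < transfer m phi f x"
    unfolding transfer_def using m1
    by (intro sum_pos) (auto intro!: mult_pos_pos Cone_pos[OF assms(2)] scons_Sigma[OF x])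
next
  fix x y assume xy: "x \<in> S" "y \<in> S" "x \<noteq> y"
  let ?c = "cpl x y"
  have key: "exp (phi (scons i x)) * f (scons i x) \<le> exp (K ?c) * (exp (phi (scons i y)) * f (scons i y))"
    if i: "i \<in> {1..m}" for i
  proof -
    have sx: "scons i x \<in> S" and sy: "scons i y \<in> S" using scons_Sigma i xy by auto
    have ne: "scons i x \<noteq> scons i y" using conc_neq[OF xy(3), of "[i]"] by (simp add: scons_conc[of i "[]", simplified])
    have cp: "cpl (scons i x) (scons i y) = Suc ?c"
      using cpl_conc[OF xy(3), of "[i]"] by (simp add: scons_conc[of i "[]", simplified])
    have 1: "phi (scons i x) \<le> phi (scons i y) + b * \<alpha> ^ Suc ?c"
    proof -
      have "\<bar>phi (scons i x) - phi (scons i y)\<bar> \<le> b * \<alpha> ^ cpl (scons i x) (scons i y)"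
        using assms(1) sx sy ne unfolding Hol_def by blast
      then show ?thesis using cp by simp
    qed
    have 2: "f (scons i x) \<le> exp (K (Suc ?c)) * f (scons i y)"
    proof -
      have "f (scons i x) \<le> exp (K (cpl (scons i x) (scons i y))) * f (scons i y)"
        using assms(2) sx sy ne unfolding Cone_def by blast
      then show ?thesis using cp by simp
    qed
    have 3: "b * \<alpha> ^ Suc ?c + K (Suc ?c) \<le> K ?c"
    proof -
      have "K ?c = K (Suc ?c) + 2 * b * \<alpha> ^ Suc ?c" using a1 by (simp add: Kc_def field_simps)
      moreover have "0 \<le> b * \<alpha> ^ Suc ?c" using a0 b0 by simp
      ultimately show ?thesis by linarith
    qed
    have "exp (phi (scons i x)) * f (scons i x) \<le> exp (phi (scons i y) + b * \<alpha> ^ Suc ?c) * (exp (K (Suc ?c)) * f (scons i y))"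
      using 1 2 Cone_pos[OF assms(2) sx] by (intro mult_mono) auto
    also have "\<dots> = exp (b * \<alpha> ^ Suc ?c + K (Suc ?c)) * (exp (phi (scons i y)) * f (scons i y))"
      by (simp add: exp_add mult_ac)
    also have "\<dots> \<le> exp (K ?c) * (exp (phi (scons i y)) * f (scons i y))"
      using 3 Cone_pos[OF assms(2) sy] by (intro mult_right_mono) auto
    finally show ?thesis .
  qed
  show "transfer m phi f x \<le> exp (K ?c) * transfer m phi f y"
    unfolding transfer_def sum_distrib_left by (intro sum_mono key)
qed

lemma Cone_Tn:
  assumes "Hol m b \<alpha> phi" "Cone m b \<alpha> f"
  shows "Cone m b \<alpha> (Tn m phi n f)"
  by (induction n) (auto simp: Tn_Suc' intro: Cone_transfer[OF assms(1)] assms(2))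

lemma expK_small: "exp (K c) - 1 \<le> (2 * b * \<alpha> / (1 - \<alpha>)) * exp K0 * \<alpha> ^ c"
proof -
  have "exp (K c) - 1 \<le> K c * exp (K c)"
  proof -
    have "1 - K c \<le> exp (- K c)" using exp_ge_add_one_self[of "- K c"] by simp
    then have "(1 - K c) * exp (K c) \<le> exp (- K c) * exp (K c)" by (intro mult_right_mono) auto
    then show ?thesis by (simp add: exp_minus field_simps)
  qed
  also have "\<dots> \<le> K c * exp K0" using K_mono[of 0 c] K_nonneg by (intro mult_left_mono) auto
  finally show ?thesis by (simp add: K_pow mult_ac)
qed

end

lemma doeblin_sum:
  fixes a bb G H :: "'w \<Rightarrow> real"
  assumes W: "finite W" "W \<noteq> {}" and pa: "\<forall>w\<in>W. 0 < a w" and pb: "\<forall>w\<in>W. 0 < bb w"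
    and e: "0 \<le> \<epsilon>"
    and D: "\<forall>w\<in>W. \<epsilon> * (bb w / sum bb W) \<le> a w / sum a W"
    and GH: "\<forall>w\<in>W. G w \<le> \<rho> * H w" and r: "0 \<le> \<rho>"
    and HQ: "\<forall>w\<in>W. \<forall>w'\<in>W. H w \<le> Q * H w'" and Hp: "\<forall>w\<in>W. 0 < H w"
  shows "(\<Sum>w\<in>W. a w * G w) / sum a W \<le> \<rho> * ((1 - \<epsilon>) * Q + \<epsilon>) * ((\<Sum>w\<in>W. bb w * H w) / sum bb W)"
proof -
  define A where "A = sum a W"
  define B where "B = sum bb W"
  have A: "0 < A" unfolding A_def using W pa by (intro sum_pos) auto
  have B: "0 < B" unfolding B_def using W pb by (intro sum_pos) auto
  define p where "p w = a w / A" for w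
  define q where "q w = bb w / B" for w
  have sp: "sum p W = 1" using A by (simp add: p_def A_def sum_divide_distrib[symmetric])
  have sq: "sum q W = 1" using B by (simp add: q_def B_def sum_divide_distrib[symmetric])
  define M where "M = (\<Sum>w\<in>W. q w * H w)"
  have lhs: "(\<Sum>w\<in>W. a w * G w) / A = (\<Sum>w\<in>W. p w * G w)"
    by (simp add: p_def sum_divide_distrib)
  have rhs: "(\<Sum>w\<in>W. bb w * H w) / B = M"
    by (simp add: q_def M_def sum_divide_distrib)
  have pq: "\<forall>w\<in>W. 0 \<le> p w - \<epsilon> * q w" using D by (simp add: p_def q_def A_def B_def)
  have HM: "H w \<le> Q * M" if "w \<in> W" for w
  proof -
    have "H w = (\<Sum>w'\<in>W. q w' * H w)" using sq by (simp add: sum_distrib_right[symmetric])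
    also have "\<dots> \<le> (\<Sum>w'\<in>W. q w' * (Q * H w'))"
      using HQ that pb B by (intro sum_mono mult_left_mono) (auto simp: q_def)
    finally show ?thesis by (simp add: M_def sum_distrib_left mult_ac)
  qed
  have "(\<Sum>w\<in>W. p w * G w) \<le> (\<Sum>w\<in>W. p w * (\<rho> * H w))"
    using GH pa A by (intro sum_mono mult_left_mono) (auto simp: p_def)
  also have "\<dots> = \<rho> * (\<Sum>w\<in>W. p w * H w)" by (simp add: sum_distrib_left mult_ac)
  also have "(\<Sum>w\<in>W. p w * H w) = (\<Sum>w\<in>W. (p w - \<epsilon> * q w) * H w) + \<epsilon> * M"
    by (simp add: M_def algebra_simps sum.distrib sum_subtractf sum_distrib_left)
  also have "(\<Sum>w\<in>W. (p w - \<epsilon> * q w) * H w) \<le> (\<Sum>w\<in>W. (p w - \<epsilon> * q w) * (Q * M))"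
    using pq HM by (intro sum_mono mult_left_mono) auto
  also have "\<dots> = (1 - \<epsilon>) * Q * M"
    using sp sq by (simp add: sum_distrib_right[symmetric] sum_subtractf sum_distrib_left[symmetric])
  finally have "(\<Sum>w\<in>W. p w * G w) \<le> \<rho> * ((1 - \<epsilon>) * Q * M + \<epsilon> * M)"
    using r by (simp add: mult_left_mono)
  then show ?thesis using lhs rhs by (simp add: A_def B_def algebra_simps)
qed

context ctx
begin

abbreviation "eps \<equiv> exp (- 3 * K0)"

lemma eps_pos: "0 < eps" by simp
lemma eps_le1: "eps \<le> 1" using K_nonneg[of 0] by simp

lemma Sw_dist0:
  assumes "Hol m b \<alpha> phi" "x \<in> S" "y \<in> S" "w \<in> words m"
  shows "Sw phi w x \<le> Sw phi w y + K0 / 2"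
proof (cases "x = y")
  case True then show ?thesis using K_nonneg[of 0] by simp
next
  case False
  then show ?thesis using Sw_dist'[OF assms(1-3) False assms(4)] K_mono[of 0 "cpl x y"] by linarith
qed

lemma Wn_ne: "Wn m n \<noteq> {}"
proof -
  have "replicate n 1 \<in> Wn m n" using m1 by (auto simp: Wn_def words_def)
  then show ?thesis by auto
qed

lemma block:
  assumes H: "Hol m b \<alpha> phi" and f: "Cone m b \<alpha> f" and g: "Cone m b \<alpha> g"
    and Q: "\<forall>x\<in>S. \<forall>y\<in>S. f x / g x \<le> Q * (f y / g y)"
    and x: "x \<in> S" and y: "y \<in> S"
  shows "Tn m phi k f x / Tn m phi k g x \<le> exp (2 * K k) * ((1 - eps) * Q + eps) * (Tn m phi k f y / Tn m phi k g y)"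
proof -
  let ?W = "Wn m k"
  define a where "a w = exp (Sw phi w x) * g (conc w x)" for w
  define bb where "bb w = exp (Sw phi w y) * g (conc w y)" for w
  define G where "G w = f (conc w x) / g (conc w x)" for w
  define Hh where "Hh w = f (conc w y) / g (conc w y)" for w
  have cx: "conc w x \<in> S" and cy: "conc w y \<in> S" if "w \<in> ?W" for w
    using that conc_Sigma x y by (auto simp: Wn_def)
  have pa: "\<forall>w\<in>?W. 0 < a w" using cx Cone_pos[OF g] by (auto simp: a_def)
  have pb: "\<forall>w\<in>?W. 0 < bb w" using cy Cone_pos[OF g] by (auto simp: bb_def)
  have ab: "a w \<le> exp (3 * K0 / 2) * bb w" "bb w \<le> exp (3 * K0 / 2) * a w" if w: "w \<in> ?W" for w
  proof -
    have s1: "Sw phi w x \<le> Sw phi w y + K0 / 2" "Sw phi w y \<le> Sw phi w x + K0 / 2"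
      using Sw_dist0[OF H x y] Sw_dist0[OF H y x] w by (auto simp: Wn_def)
    have g1: "g (conc w x) \<le> exp K0 * g (conc w y)" "g (conc w y) \<le> exp K0 * g (conc w x)"
      using Cone_le[OF g] cx cy w by auto
    have gp: "0 < g (conc w x)" "0 < g (conc w y)" using Cone_pos[OF g] cx cy w by auto
    have "a w \<le> exp (Sw phi w y + K0 / 2) * (exp K0 * g (conc w y))"
      unfolding a_def using s1 g1 gp by (intro mult_mono) auto
    also have "\<dots> = exp (3 * K0 / 2) * bb w" by (simp add: bb_def exp_add[symmetric] mult_ac)
    finally show "a w \<le> exp (3 * K0 / 2) * bb w" .
    have "bb w \<le> exp (Sw phi w x + K0 / 2) * (exp K0 * g (conc w x))"
      unfolding bb_def using s1 g1 gp by (intro mult_mono) auto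
    also have "\<dots> = exp (3 * K0 / 2) * a w" by (simp add: a_def exp_add[symmetric] mult_ac)
    finally show "bb w \<le> exp (3 * K0 / 2) * a w" .
  qed
  have SA: "sum a ?W \<le> exp (3 * K0 / 2) * sum bb ?W"
    using ab(1) by (simp add: sum_distrib_left sum_mono)
  have Bpos: "0 < sum bb ?W" using pb Wn_finite Wn_ne by (intro sum_pos) auto
  have D: "\<forall>w\<in>?W. eps * (bb w / sum bb ?W) \<le> a w / sum a ?W"
  proof
    fix w assume w: "w \<in> ?W"
    have Apos: "0 < sum a ?W" using pa Wn_finite Wn_ne by (intro sum_pos) auto
    have "eps * (bb w / sum bb ?W) = exp (- 3 * K0 / 2) * bb w / (exp (3 * K0 / 2) * sum bb ?W)"
      by (simp add: exp_add[symmetric] field_simps exp_minus)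
    also have "\<dots> \<le> a w / (exp (3 * K0 / 2) * sum bb ?W)"
    proof -
      have "exp (- 3 * K0 / 2) * bb w \<le> a w"
        using ab(2)[OF w] by (simp add: exp_minus field_simps)
      then show ?thesis using Bpos by (intro divide_right_mono) auto
    qed
    also have "\<dots> \<le> a w / sum a ?W"
      using SA Apos pa w by (intro divide_left_mono) auto
    finally show "eps * (bb w / sum bb ?W) \<le> a w / sum a ?W" .
  qed
  have GH: "\<forall>w\<in>?W. G w \<le> exp (2 * K k) * Hh w"
  proof
    fix w assume w: "w \<in> ?W"
    have ag: "\<forall>n<k. conc w x n = conc w y n" "\<forall>n<k. conc w y n = conc w x n"
      using w by (auto simp: Wn_def conc_def)
    have 1: "f (conc w x) \<le> exp (K k) * f (conc w y)" using Cone_agree[OF f cx[OF w] cy[OF w] ag(1)] .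
    have 2: "g (conc w y) \<le> exp (K k) * g (conc w x)" using Cone_agree[OF g cy[OF w] cx[OF w] ag(2)] .
    have gx: "0 < g (conc w x)" and gy: "0 < g (conc w y)" using Cone_pos[OF g] cx cy w by auto
    have fy: "0 < f (conc w y)" using Cone_pos[OF f] cy w by auto
    have "f (conc w x) * g (conc w y) \<le> (exp (K k) * f (conc w y)) * (exp (K k) * g (conc w x))"
      using 1 2 gy fy by (intro mult_mono) auto
    then show "G w \<le> exp (2 * K k) * Hh w"
      using gx gy by (simp add: G_def Hh_def field_simps exp_add[symmetric] mult_ac)
  qed
  have HQ: "\<forall>w\<in>?W. \<forall>w'\<in>?W. Hh w \<le> Q * Hh w'" using Q cy by (auto simp: Hh_def)
  have Hp: "\<forall>w\<in>?W. 0 < Hh w" using Cone_pos[OF f] Cone_pos[OF g] cy by (auto simp: Hh_def)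
  have eq1: "Tn m phi k f x = (\<Sum>w\<in>?W. a w * G w)"
    unfolding Tn_words
  proof (intro sum.cong refl)
    fix w assume "w \<in> ?W"
    then have "g (conc w x) \<noteq> 0" using Cone_pos[OF g] cx by (metis less_irrefl)
    then show "exp (Sw phi w x) * f (conc w x) = a w * G w" by (simp add: a_def G_def)
  qed
  have eq2: "Tn m phi k g x = sum a ?W" unfolding Tn_words a_def ..
  have eq3: "Tn m phi k f y = (\<Sum>w\<in>?W. bb w * Hh w)"
    unfolding Tn_words
  proof (intro sum.cong refl)
    fix w assume "w \<in> ?W"
    then have "g (conc w y) \<noteq> 0" using Cone_pos[OF g] cy by (metis less_irrefl)
    then show "exp (Sw phi w y) * f (conc w y) = bb w * Hh w" by (simp add: bb_def Hh_def)
  qed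
  have eq4: "Tn m phi k g y = sum bb ?W" unfolding Tn_words bb_def ..
  show ?thesis unfolding eq1 eq2 eq3 eq4
    by (rule doeblin_sum[OF Wn_finite Wn_ne pa pb _ D GH _ HQ Hp]) auto
qed

end

lemma Tn_add: "Tn m phi (a + c) f = Tn m phi a (Tn m phi c f)"
  by (simp add: Tn_def funpow_add)

lemma arith_step:
  fixes e \<rho> E0 :: real
  assumes e: "0 < e" "e \<le> 1" and r: "1 \<le> \<rho>" "\<rho> \<le> 1 + e / 2" and E0: "0 \<le> E0"
  shows "\<rho> * ((1 - e) * (1 + (1 - e / 2) ^ j * E0 + 2 * (\<rho> - 1) / e) + e)
         \<le> 1 + (1 - e / 2) ^ Suc j * E0 + 2 * (\<rho> - 1) / e"
proof -
  define E where "E = (1 - e / 2) ^ j * E0 + 2 * (\<rho> - 1) / e"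
  have E: "0 \<le> E" unfolding E_def using e r E0 by (intro add_nonneg_nonneg mult_nonneg_nonneg divide_nonneg_pos) auto
  have 1: "\<rho> * (1 - e) \<le> 1 - e / 2"
  proof -
    have "\<rho> * (1 - e) \<le> (1 + e / 2) * (1 - e)" using r e by (intro mult_right_mono) auto
    also have "\<dots> \<le> 1 - e / 2" using e by (simp add: algebra_simps)
    finally show ?thesis .
  qed
  have "\<rho> * ((1 - e) * (1 + E) + e) = \<rho> * (1 - e) * E + \<rho>" by (simp add: algebra_simps)
  also have "\<dots> \<le> (1 - e / 2) * E + \<rho>" using 1 E by (simp add: mult_right_mono)
  also have "\<dots> = 1 + (1 - e / 2) ^ Suc j * E0 + 2 * (\<rho> - 1) / e"
    unfolding E_def using e by (simp add: field_simps)
  finally show ?thesis by (simp add: E_def add.assoc)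
qed

context ctx
begin

lemma mix:
  assumes H: "Hol m b \<alpha> phi" and f: "Cone m b \<alpha> f" and g: "Cone m b \<alpha> g"
    and k: "exp (2 * K k) \<le> 1 + eps / 2"
    and x: "x \<in> S" and y: "y \<in> S"
  shows "Tn m phi (j * k) f x / Tn m phi (j * k) g x \<le>
     (1 + (1 - eps / 2) ^ j * (exp (2 * K0) - 1) + 2 * (exp (2 * K k) - 1) / eps) *
     (Tn m phi (j * k) f y / Tn m phi (j * k) g y)"
  using x y
proof (induction j arbitrary: x y)
  case 0
  have fx: "f x \<le> exp K0 * f y" and gy: "g y \<le> exp K0 * g x"
    using Cone_le[OF f 0(1,2)] Cone_le[OF g 0(2,1)] by auto
  have pos: "0 < f y" "0 < g x" "0 < g y" using Cone_pos f g 0 by auto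
  have "f x / g x \<le> exp (2 * K0) * (f y / g y)"
  proof -
    have "f x * g y \<le> (exp K0 * f y) * (exp K0 * g x)"
      using fx gy pos by (intro mult_mono) auto
    then show ?thesis using pos by (simp add: field_simps exp_add[symmetric] mult_ac)
  qed
  also have "\<dots> \<le> (1 + (1 - eps / 2) ^ 0 * (exp (2 * K0) - 1) + 2 * (exp (2 * K k) - 1) / eps) * (f y / g y)"
  proof -
    have "0 \<le> 2 * (exp (2 * K k) - 1) / eps" using K_nonneg[of k] by simp
    then show ?thesis using pos by (intro mult_right_mono) auto
  qed
  finally show ?case by simp
next
  case (Suc j)
  define f' where "f' = Tn m phi (j * k) f"
  define g' where "g' = Tn m phi (j * k) g"
  define Q where "Q = 1 + (1 - eps / 2) ^ j * (exp (2 * K0) - 1) + 2 * (exp (2 * K k) - 1) / eps"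
  have cf: "Cone m b \<alpha> f'" "Cone m b \<alpha> g'" unfolding f'_def g'_def using Cone_Tn H f g by auto
  have Qh: "\<forall>x\<in>S. \<forall>y\<in>S. f' x / g' x \<le> Q * (f' y / g' y)"
    using Suc.IH unfolding f'_def g'_def Q_def by blast
  have eq: "\<And>F. Tn m phi (Suc j * k) F = Tn m phi k (Tn m phi (j * k) F)"
    by (simp add: Tn_add[symmetric] add.commute)
  have "Tn m phi k f' x / Tn m phi k g' x \<le> exp (2 * K k) * ((1 - eps) * Q + eps) * (Tn m phi k f' y / Tn m phi k g' y)"
    by (rule block[OF H cf Qh Suc.prems])
  also have "\<dots> \<le> (1 + (1 - eps / 2) ^ Suc j * (exp (2 * K0) - 1) + 2 * (exp (2 * K k) - 1) / eps) * (Tn m phi k f' y / Tn m phi k g' y)"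
  proof (rule mult_right_mono)
    show "exp (2 * K k) * ((1 - eps) * Q + eps) \<le> 1 + (1 - eps / 2) ^ Suc j * (exp (2 * K0) - 1) + 2 * (exp (2 * K k) - 1) / eps"
      unfolding Q_def by (rule arith_step) (use eps_pos eps_le1 k K_nonneg[of k] K_nonneg[of 0] in auto)
    show "0 \<le> Tn m phi k f' y / Tn m phi k g' y"
      using Cone_pos[OF Cone_Tn[OF H cf(1), of k] Suc.prems(2)] Cone_pos[OF Cone_Tn[OF H cf(2), of k] Suc.prems(2)] by simp
  qed
  finally show ?case unfolding eq f'_def g'_def .
qed

lemma scons_cont: "continuous_on UNIV (scons i)"
proof (rule continuous_on_coordinatewise_then_product)
  fix n show "continuous_on UNIV (\<lambda>x. scons i x n)"
    by (cases n) (auto simp: scons_def)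
qed

lemma cont_scons:
  assumes "continuous_on S g" "i \<in> {1..m}"
  shows "continuous_on S (\<lambda>x. g (scons i x))"
  by (rule continuous_on_compose2[OF assms(1) continuous_on_subset[OF scons_cont]])
     (use scons_Sigma assms(2) in auto)

lemma Hol_CC: assumes "Hol m b \<alpha> phi" shows "CC m phi"
  unfolding CC_def
proof (intro ballI allI impI)
  fix x and e :: real assume x: "x \<in> S" and e: "0 < e"
  obtain N where N: "\<alpha> ^ N < e / b" using real_arch_pow_inv[of "e / b" \<alpha>] e b0 a1 by auto
  show "\<exists>N. \<forall>y\<in>S. (\<forall>n<N. y n = x n) \<longrightarrow> \<bar>phi y - phi x\<bar> < e"
  proof (intro exI ballI impI)
    fix y assume y: "y \<in> S" and ag: "\<forall>n<N. y n = x n"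
    show "\<bar>phi y - phi x\<bar> < e"
    proof (cases "y = x")
      case False
      then have "\<bar>phi y - phi x\<bar> \<le> b * \<alpha> ^ cpl y x" using assms x y by (auto simp: Hol_def)
      also have "\<dots> \<le> b * \<alpha> ^ N"
        using cpl_ge[OF False ag] a0 a1 b0 by (intro mult_left_mono power_decreasing) auto
      also have "\<dots> < e" using N b0 by (simp add: field_simps)
      finally show ?thesis .
    qed (use e in auto)
  qed
qed

lemma Cone_CC: assumes f: "Cone m b \<alpha> f" shows "CC m f"
  unfolding CC_def
proof (intro ballI allI impI)
  fix x and e :: real assume x: "x \<in> S" and e: "0 < e"
  define A where "A = (2 * b * \<alpha> / (1 - \<alpha>)) * exp K0"
  have A: "0 \<le> A" unfolding A_def using a0 a1 b0 by simp
  have fx: "0 < f x" using Cone_pos[OF f x] .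
  define B where "B = A * exp K0 * f x + 1"
  have "0 \<le> A * exp K0 * f x" using A fx by simp
  then have B: "0 < B" unfolding B_def by linarith
  obtain N where N: "\<alpha> ^ N < e / B" using real_arch_pow_inv[of "e / B" \<alpha>] e B a1 by auto
  have small: "(exp (K N) - 1) * exp K0 * f x < e"
  proof -
    have "(exp (K N) - 1) * exp K0 * f x \<le> (A * \<alpha> ^ N) * exp K0 * f x"
      using expK_small[of N] fx by (intro mult_right_mono) (auto simp: A_def)
    also have "\<dots> \<le> B * \<alpha> ^ N" using a0 by (simp add: B_def algebra_simps)
    also have "\<dots> < e" using N B by (simp add: field_simps)
    finally show ?thesis .
  qed
  have ek: "0 \<le> exp (K N) - 1" using K_nonneg[of N] by simp
  have e0: "1 \<le> exp K0" using K_nonneg[of 0] by simp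
  show "\<exists>N. \<forall>y\<in>S. (\<forall>n<N. y n = x n) \<longrightarrow> \<bar>f y - f x\<bar> < e"
  proof (intro exI ballI impI)
    fix y assume y: "y \<in> S" and ag: "\<forall>n<N. y n = x n"
    have ag': "\<forall>n<N. x n = y n" using ag by auto
    have 1: "f y \<le> exp (K N) * f x" using Cone_agree[OF f y x ag] .
    have 2: "f x \<le> exp (K N) * f y" using Cone_agree[OF f x y ag'] .
    have 3: "f y \<le> exp K0 * f x" using Cone_le[OF f y x] .
    have "f y - f x \<le> (exp (K N) - 1) * f x" using 1 by (simp add: algebra_simps)
    also have "\<dots> \<le> (exp (K N) - 1) * exp K0 * f x"
      using ek e0 fx by (simp add: mult_left_mono mult_right_mono mult.assoc)
    finally have a: "f y - f x < e" using small by linarith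
    have "f x - f y \<le> (exp (K N) - 1) * f y" using 2 by (simp add: algebra_simps)
    also have "\<dots> \<le> (exp (K N) - 1) * (exp K0 * f x)" using 3 ek by (rule mult_left_mono)
    finally have b: "f x - f y < e" using small by (simp add: mult.assoc)
    show "\<bar>f y - f x\<bar> < e" using a b by linarith
  qed
qed

lemma Cone_cont: "Cone m b \<alpha> f \<Longrightarrow> continuous_on S f"
  by (rule CC_cont[OF Cone_CC])

lemma Hol_cont: "Hol m b \<alpha> phi \<Longrightarrow> continuous_on S phi"
  by (rule CC_cont[OF Hol_CC])

lemma transfer_cont:
  assumes "Hol m b \<alpha> phi" "continuous_on S f"
  shows "continuous_on S (transfer m phi f)"
  unfolding transfer_def
  by (intro continuous_intros cont_scons Hol_cont assms) auto

lemma Tn_cont: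
  assumes "Hol m b \<alpha> phi" "continuous_on S f"
  shows "continuous_on S (Tn m phi n f)"
  by (induction n) (auto simp: Tn_Suc' intro: transfer_cont assms)

lemma cyl_cont: "continuous_on S (indicator (cyl m w) :: _ \<Rightarrow> real)"
proof (rule CC_cont, unfold CC_def, intro ballI allI impI exI[of _ "length w"])
  fix x y and e :: real assume "x \<in> S" "0 < e" "y \<in> S" "\<forall>n<length w. y n = x n"
  then have "y \<in> cyl m w \<longleftrightarrow> x \<in> cyl m w" by (auto simp: cyl_def)
  then show "\<bar>indicator (cyl m w) y - indicator (cyl m w) x\<bar> < e" using \<open>0 < e\<close>
    by (simp add: indicator_def)
qed

end

context ctx
begin

lemma Sw_cmp:
  assumes "\<forall>x\<in>S. p1 x \<le> p2 x + \<delta>" "x \<in> S" "w \<in> words m"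
  shows "Sw p1 w x \<le> Sw p2 w x + real (length w) * \<delta>"
  using assms(3)
proof (induction w)
  case (Cons i w)
  have w: "w \<in> words m" using Cons.prems by (auto simp: words_def)
  have "p1 (conc (i # w) x) \<le> p2 (conc (i # w) x) + \<delta>"
    using assms(1) conc_Sigma[OF assms(2) Cons.prems] by blast
  then show ?case using Cons.IH[OF w] by (simp add: algebra_simps)
qed simp

lemma Tn_cmp:
  assumes "\<forall>x\<in>S. p1 x \<le> p2 x + \<delta>" "\<forall>x\<in>S. 0 \<le> f x" "x \<in> S"
  shows "Tn m p1 N f x \<le> exp (real N * \<delta>) * Tn m p2 N f x"
  unfolding Tn_words sum_distrib_left
proof (rule sum_mono)
  fix w assume w: "w \<in> Wn m N"
  then have "Sw p1 w x \<le> Sw p2 w x + real N * \<delta>"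
    using Sw_cmp[OF assms(1,3)] by (auto simp: Wn_def)
  moreover have "0 \<le> f (conc w x)" using assms(2) conc_Sigma[OF assms(3)] w by (auto simp: Wn_def)
  ultimately show "exp (Sw p1 w x) * f (conc w x) \<le> exp (real N * \<delta>) * (exp (Sw p2 w x) * f (conc w x))"
    by (auto simp: exp_add[symmetric] mult_ac intro!: mult_left_mono)
qed

lemma Tn_scale: "Tn m p N (\<lambda>x. c * f x) x = c * Tn m p N f x"
  unfolding Tn_words by (simp add: sum_distrib_left mult_ac)

lemma Tn_cong:
  assumes "\<forall>x\<in>S. f x = g x" "x \<in> S"
  shows "Tn m p N f x = Tn m p N g x"
  unfolding Tn_words using assms conc_Sigma by (intro sum.cong) (auto simp: Wn_def)

lemma Tn_eig:
  assumes "\<forall>x\<in>S. transfer m p h x = r * h x" "x \<in> S"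
  shows "Tn m p N h x = r ^ N * h x"
  using assms(2)
proof (induction N arbitrary: x)
  case (Suc N)
  have "Tn m p (Suc N) h x = Tn m p N (transfer m p h) x" by (simp add: Tn_Suc)
  also have "\<dots> = Tn m p N (\<lambda>x. r * h x) x" using assms(1) Suc.prems by (rule Tn_cong)
  also have "\<dots> = r ^ Suc N * h x" by (simp add: Tn_scale Suc.IH[OF Suc.prems])
  finally show ?case .
qed simp

end

locale meas = ctx +
  fixes \<mu> :: "(nat \<Rightarrow> nat) measure"
  assumes prob: "prob_space \<mu>" and sets_mu: "sets \<mu> = sets (Sigma_M m)"
begin

lemma space_mu: "space \<mu> = S"
  using sets_eq_imp_space_eq[OF sets_mu] by (simp add: space_SM)

lemma meas_cont: "continuous_on S f \<Longrightarrow> f \<in> borel_measurable \<mu>"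
  using cont_meas measurable_cong_sets[OF sets_mu refl] by blast

lemma integrable_bdd:
  fixes f :: "_ \<Rightarrow> real"
  assumes "continuous_on S f" "\<forall>x\<in>S. \<bar>f x\<bar> \<le> B"
  shows "integrable \<mu> f"
  by (rule finite_measure.integrable_const_bound[OF prob_space.finite_measure[OF prob], where B=B])
     (use assms space_mu meas_cont in auto)

lemma integrable_Cone:
  fixes f :: "_ \<Rightarrow> real"
  assumes "Cone m b \<alpha> f"
  shows "integrable \<mu> f"
proof -
  obtain x0 where x0: "x0 \<in> S" using S_nonempty by blast
  show ?thesis
  proof (rule integrable_bdd[OF Cone_cont[OF assms], where B="exp K0 * f x0"])
    show "\<forall>x\<in>S. \<bar>f x\<bar> \<le> exp K0 * f x0"
      using Cone_le[OF assms _ x0] Cone_pos[OF assms] by (auto simp: less_imp_le)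
  qed
qed

lemma int_mono:
  fixes f g :: "_ \<Rightarrow> real"
  assumes "integrable \<mu> f" "integrable \<mu> g" "\<forall>x\<in>S. f x \<le> g x"
  shows "(\<integral>x. f x \<partial>\<mu>) \<le> (\<integral>x. g x \<partial>\<mu>)"
  by (rule Bochner_Integration.integral_mono) (use assms space_mu in auto)

lemma int_const: "(\<integral>x. c \<partial>\<mu>) = (c::real)"
  using prob_space.prob_space[OF prob] by (simp add: prob_space_def)

lemma int_cmult: "(\<integral>x. c * f x \<partial>\<mu>) = c * (\<integral>x. f x \<partial>\<mu>)" for f :: "_ \<Rightarrow> real"
  by simp

lemma int_cong: fixes f g :: "_ \<Rightarrow> real" shows "\<forall>x\<in>S. f x = g x \<Longrightarrow> (\<integral>x. f x \<partial>\<mu>) = (\<integral>x. g x \<partial>\<mu>)"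
  by (rule Bochner_Integration.integral_cong) (auto simp: space_mu)

lemma int_Cone_pos:
  fixes f :: "_ \<Rightarrow> real"
  assumes "Cone m b \<alpha> f" shows "0 < (\<integral>x. f x \<partial>\<mu>)"
proof -
  obtain x0 where x0: "x0 \<in> S" using S_nonempty by blast
  have "(\<integral>x. exp (- K0) * f x0 \<partial>\<mu>) \<le> (\<integral>x. f x \<partial>\<mu>)"
  proof (rule int_mono)
    show "\<forall>x\<in>S. exp (- K0) * f x0 \<le> f x"
      using Cone_le[OF assms x0] by (auto simp: exp_minus field_simps)
  next
    show "integrable \<mu> (\<lambda>x. exp (- K0) * f x0)"
      by (rule integrable_Cone[OF Cone_const]) (use Cone_pos[OF assms x0] in simp)
  qed (rule integrable_Cone[OF assms])
  moreover have "0 < exp (- K0) * f x0" using Cone_pos[OF assms x0] by simp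
  ultimately show ?thesis unfolding int_const by linarith
qed

end

context meas
begin

lemma sandwich:
  fixes G h :: "_ \<Rightarrow> real"
  assumes G: "Cone m b \<alpha> G" and h: "Cone m b \<alpha> h" and Q: "0 < Q"
    and mixq: "\<forall>x\<in>S. \<forall>y\<in>S. G x / h x \<le> Q * (G y / h y)" and y0: "y0 \<in> S"
  shows "(\<integral>x. G x \<partial>\<mu>) \<le> Q * (G y0 / h y0) * (\<integral>x. h x \<partial>\<mu>)"
    and "(G y0 / h y0) / Q * (\<integral>x. h x \<partial>\<mu>) \<le> (\<integral>x. G x \<partial>\<mu>)"
proof -
  define \<kappa> where "\<kappa> = G y0 / h y0"
  have p1: "G x \<le> Q * \<kappa> * h x" if x: "x \<in> S" for x
  proof -
    have "G x / h x \<le> Q * \<kappa>" using mixq x y0 by (auto simp: \<kappa>_def)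
    then show ?thesis using Cone_pos[OF h x] by (simp add: field_simps)
  qed
  have p2: "\<kappa> / Q * h x \<le> G x" if x: "x \<in> S" for x
  proof -
    have "\<kappa> \<le> Q * (G x / h x)" using mixq x y0 by (auto simp: \<kappa>_def)
    then show ?thesis using Cone_pos[OF h x] Q by (simp add: field_simps)
  qed
  have "(\<integral>x. G x \<partial>\<mu>) \<le> (\<integral>x. Q * \<kappa> * h x \<partial>\<mu>)"
    by (rule int_mono) (use p1 integrable_Cone G h in auto)
  then show "(\<integral>x. G x \<partial>\<mu>) \<le> Q * (G y0 / h y0) * (\<integral>x. h x \<partial>\<mu>)" by (simp add: \<kappa>_def)
  have "(\<integral>x. \<kappa> / Q * h x \<partial>\<mu>) \<le> (\<integral>x. G x \<partial>\<mu>)"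
    by (rule int_mono) (use p2 integrable_Cone G h in auto)
  then show "(G y0 / h y0) / Q * (\<integral>x. h x \<partial>\<mu>) \<le> (\<integral>x. G x \<partial>\<mu>)" by (simp add: \<kappa>_def)
qed

end

locale eig = meas +
  fixes p h :: "(nat \<Rightarrow> nat) \<Rightarrow> real" and r :: real
  assumes Hp: "Hol m b \<alpha> p" and hC: "Cone m b \<alpha> h" and rpos: "0 < r"
    and heig: "\<forall>x\<in>S. transfer m p h x = r * h x"
    and neig: "\<And>f. continuous_on S f \<Longrightarrow> (\<integral>x. transfer m p f x \<partial>\<mu>) = r * (\<integral>x. f x \<partial>\<mu>)"
    and hnorm: "(\<integral>x. h x \<partial>\<mu>) = 1"
begin

lemma int_Tn:
  assumes "continuous_on S f"
  shows "(\<integral>x. Tn m p N f x \<partial>\<mu>) = r ^ N * (\<integral>x. f x \<partial>\<mu>)"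
proof (induction N)
  case (Suc N)
  have "(\<integral>x. Tn m p (Suc N) f x \<partial>\<mu>) = r * (\<integral>x. Tn m p N f x \<partial>\<mu>)"
    unfolding Tn_Suc' by (rule neig[OF Tn_cont[OF Hp assms]])
  then show ?case using Suc.IH by simp
qed simp

lemma cyl_int:
  assumes "continuous_on S f" "w \<in> words m"
  shows "(\<integral>x. exp (Sw p w x) * f (conc w x) \<partial>\<mu>) = r ^ length w * (\<integral>x. indicator (cyl m w) x * f x \<partial>\<mu>)"
  using assms
proof (induction w arbitrary: f)
  case Nil
  have "\<forall>x\<in>S. f x = indicator (cyl m []) x * f x" by (simp add: cyl_def)
  then show ?case using int_cong by simp
next
  case (Cons i w)
  have i: "i \<in> {1..m}" and w: "w \<in> words m" using Cons.prems(2) by (auto simp: words_def)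
  define g where "g y = exp (p (scons i y)) * f (scons i y)" for y
  have gc: "continuous_on S g" unfolding g_def
    by (intro continuous_intros continuous_on_exp cont_scons Hol_cont Hp Cons.prems(1) i)
  have "(\<integral>x. exp (Sw p (i # w) x) * f (conc (i # w) x) \<partial>\<mu>) = (\<integral>x. exp (Sw p w x) * g (conc w x) \<partial>\<mu>)"
    by (simp add: g_def scons_conc exp_add mult_ac)
  also have "\<dots> = r ^ length w * (\<integral>x. indicator (cyl m w) x * g x \<partial>\<mu>)"
    by (rule Cons.IH[OF gc w])
  also have "(\<integral>x. indicator (cyl m w) x * g x \<partial>\<mu>) = (\<integral>x. transfer m p (\<lambda>z. indicator (cyl m (i # w)) z * f z) x \<partial>\<mu>)"
  proof (rule int_cong, intro ballI)
    fix y assume y: "y \<in> S"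
    have ind: "indicator (cyl m (i # w)) (scons j y) = (if j = i then indicator (cyl m w) y else (0::real))"
      if j: "j \<in> {1..m}" for j
    proof -
      have "scons j y \<in> S" using scons_Sigma[OF y j] .
      moreover have "(\<forall>n<length (i # w). scons j y n = (i # w) ! n) \<longleftrightarrow> j = i \<and> (\<forall>n<length w. y n = w ! n)"
        by (auto simp: scons_def nth_Cons split: nat.splits)
      ultimately show ?thesis using y by (auto simp: cyl_def indicator_def)
    qed
    have "transfer m p (\<lambda>z. indicator (cyl m (i # w)) z * f z) y =
        (\<Sum>j\<in>{1..m}. if j = i then exp (p (scons i y)) * (indicator (cyl m w) y * f (scons i y)) else 0)"
      unfolding transfer_def by (intro sum.cong refl) (auto simp: ind)
    also have "\<dots> = indicator (cyl m w) y * g y" using i by (simp add: g_def mult_ac)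
    finally show "indicator (cyl m w) y * g y = transfer m p (\<lambda>z. indicator (cyl m (i # w)) z * f z) y" by simp
  qed
  also have "\<dots> = r * (\<integral>x. indicator (cyl m (i # w)) x * f x \<partial>\<mu>)"
    by (rule neig) (intro continuous_intros cyl_cont Cons.prems(1))
  finally show ?case by simp
qed

lemma cyl_meas:
  assumes "w \<in> words m"
  shows "measure \<mu> (cyl m w) = (\<integral>x. exp (Sw p w x) \<partial>\<mu>) / r ^ length w"
proof -
  have "(\<integral>x. exp (Sw p w x) * 1 \<partial>\<mu>) = r ^ length w * (\<integral>x. indicator (cyl m w) x * 1 \<partial>\<mu>)"
    by (rule cyl_int[OF _ assms]) simp
  moreover have "(\<integral>x. indicator (cyl m w) x \<partial>\<mu>) = measure \<mu> (cyl m w)"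
  proof -
    have "cyl m w \<inter> space \<mu> = cyl m w" by (auto simp: space_mu cyl_def)
    then show ?thesis by simp
  qed
  ultimately show ?thesis using rpos by (simp add: field_simps)
qed

end

locale pair = e1: eig m b \<alpha> \<mu>1 p1 h1 r1 + e2: eig m b \<alpha> \<mu>2 p2 h2 r2
  for m b \<alpha> \<mu>1 p1 h1 r1 \<mu>2 p2 h2 r2 +
  fixes \<delta> :: real
  assumes close: "\<forall>x\<in>Sigma_space m. \<bar>p1 x - p2 x\<bar> \<le> \<delta>"
begin

lemma c12: "\<forall>x\<in>Sigma_space m. p1 x \<le> p2 x + \<delta>" using close by (auto simp: abs_le_iff)
lemma c21: "\<forall>x\<in>Sigma_space m. p2 x \<le> p1 x + \<delta>" using close by (auto simp: abs_le_iff)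

lemma r12: "r1 \<le> exp \<delta> * r2"
proof -
  have "r1 * (\<integral>x. h2 x \<partial>\<mu>1) = (\<integral>x. transfer m p1 h2 x \<partial>\<mu>1)"
    using e1.neig[OF e1.Cone_cont[OF e2.hC]] by simp
  also have "\<dots> \<le> (\<integral>x. exp \<delta> * r2 * h2 x \<partial>\<mu>1)"
  proof (rule e1.int_mono)
    show "integrable \<mu>1 (transfer m p1 h2)" by (rule e1.integrable_Cone[OF e1.Cone_transfer[OF e1.Hp e2.hC]])
    show "integrable \<mu>1 (\<lambda>x. exp \<delta> * r2 * h2 x)"
      by (rule e1.integrable_Cone[OF e1.Cone_scale[OF e2.hC]]) (use e2.rpos in simp)
    show "\<forall>x\<in>Sigma_space m. transfer m p1 h2 x \<le> exp \<delta> * r2 * h2 x"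
    proof
      fix x assume x: "x \<in> Sigma_space m"
      have "Tn m p1 1 h2 x \<le> exp (real 1 * \<delta>) * Tn m p2 1 h2 x"
        by (rule e1.Tn_cmp[OF c12 _ x]) (use e1.Cone_pos[OF e2.hC] in \<open>auto simp: less_imp_le\<close>)
      then show "transfer m p1 h2 x \<le> exp \<delta> * r2 * h2 x" using e2.heig x by (simp add: Tn_def)
    qed
  qed
  also have "\<dots> = exp \<delta> * r2 * (\<integral>x. h2 x \<partial>\<mu>1)" by simp
  finally show ?thesis using e1.int_Cone_pos[OF e2.hC] by simp
qed

lemma r21: "r2 \<le> exp \<delta> * r1"
proof -
  have "r2 * (\<integral>x. h1 x \<partial>\<mu>2) = (\<integral>x. transfer m p2 h1 x \<partial>\<mu>2)"
    using e2.neig[OF e1.Cone_cont[OF e1.hC]] by simp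
  also have "\<dots> \<le> (\<integral>x. exp \<delta> * r1 * h1 x \<partial>\<mu>2)"
  proof (rule e2.int_mono)
    show "integrable \<mu>2 (transfer m p2 h1)" by (rule e2.integrable_Cone[OF e1.Cone_transfer[OF e2.Hp e1.hC]])
    show "integrable \<mu>2 (\<lambda>x. exp \<delta> * r1 * h1 x)"
      by (rule e2.integrable_Cone[OF e1.Cone_scale[OF e1.hC]]) (use e1.rpos in simp)
    show "\<forall>x\<in>Sigma_space m. transfer m p2 h1 x \<le> exp \<delta> * r1 * h1 x"
    proof
      fix x assume x: "x \<in> Sigma_space m"
      have "Tn m p2 1 h1 x \<le> exp (real 1 * \<delta>) * Tn m p1 1 h1 x"
        by (rule e1.Tn_cmp[OF c21 _ x]) (use e1.Cone_pos[OF e1.hC] in \<open>auto simp: less_imp_le\<close>)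
      then show "transfer m p2 h1 x \<le> exp \<delta> * r1 * h1 x" using e1.heig x by (simp add: Tn_def)
    qed
  qed
  also have "\<dots> = exp \<delta> * r1 * (\<integral>x. h1 x \<partial>\<mu>2)" by simp
  finally show ?thesis using e2.int_Cone_pos[OF e1.hC] by simp
qed

lemma ratio_pow: "(r2 / r1) ^ N \<le> exp (real N * \<delta>)" "(r1 / r2) ^ N \<le> exp (real N * \<delta>)"
proof -
  have "r2 / r1 \<le> exp \<delta>" using r21 e1.rpos by (simp add: field_simps)
  then have "(r2 / r1) ^ N \<le> exp \<delta> ^ N" using e1.rpos e2.rpos by (intro power_mono) auto
  then show "(r2 / r1) ^ N \<le> exp (real N * \<delta>)" by (simp add: exp_of_nat_mult)
  have "r1 / r2 \<le> exp \<delta>" using r12 e2.rpos by (simp add: field_simps)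
  then have "(r1 / r2) ^ N \<le> exp \<delta> ^ N" using e1.rpos e2.rpos by (intro power_mono) auto
  then show "(r1 / r2) ^ N \<le> exp (real N * \<delta>)" by (simp add: exp_of_nat_mult)
qed

lemma G_Cone: assumes F: "Cone m b \<alpha> F" shows "Cone m b \<alpha> (\<lambda>x. Tn m p2 N F x / r2 ^ N)"
proof -
  have "Cone m b \<alpha> (Tn m p2 N F)" by (rule e1.Cone_Tn[OF e2.Hp F])
  then have "Cone m b \<alpha> (\<lambda>x. (1 / r2 ^ N) * Tn m p2 N F x)" by (rule e1.Cone_scale) (use e2.rpos in simp)
  moreover have "(\<lambda>x. Tn m p2 N F x / r2 ^ N) = (\<lambda>x. (1 / r2 ^ N) * Tn m p2 N F x)" by auto
  ultimately show ?thesis by metis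
qed

lemma upper:
  assumes F: "Cone m b \<alpha> F"
  shows "(\<integral>x. F x \<partial>\<mu>1) \<le> exp (real N * \<delta>) ^ 2 * (\<integral>x. Tn m p2 N F x / r2 ^ N \<partial>\<mu>1)"
proof -
  have Fnn: "\<forall>x\<in>Sigma_space m. 0 \<le> F x" using e1.Cone_pos[OF F] by (auto simp: less_imp_le)
  have "(\<integral>x. Tn m p1 N F x \<partial>\<mu>1) = r1 ^ N * (\<integral>x. F x \<partial>\<mu>1)"
    by (rule e1.int_Tn[OF e1.Cone_cont[OF F]])
  then have 1: "(\<integral>x. F x \<partial>\<mu>1) = (\<integral>x. Tn m p1 N F x \<partial>\<mu>1) / r1 ^ N" using e1.rpos by (simp add: field_simps)
  have "(\<integral>x. Tn m p1 N F x \<partial>\<mu>1) \<le> (\<integral>x. exp (real N * \<delta>) * r2 ^ N * (Tn m p2 N F x / r2 ^ N) \<partial>\<mu>1)"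
  proof (rule e1.int_mono)
    show "integrable \<mu>1 (Tn m p1 N F)" by (rule e1.integrable_Cone[OF e1.Cone_Tn[OF e1.Hp F]])
    show "integrable \<mu>1 (\<lambda>x. exp (real N * \<delta>) * r2 ^ N * (Tn m p2 N F x / r2 ^ N))"
      by (rule e1.integrable_Cone[OF e1.Cone_scale[OF G_Cone[OF F]]]) (use e2.rpos in simp)
    show "\<forall>x\<in>Sigma_space m. Tn m p1 N F x \<le> exp (real N * \<delta>) * r2 ^ N * (Tn m p2 N F x / r2 ^ N)"
      using e1.Tn_cmp[OF c12 Fnn] e2.rpos by simp
  qed
  also have "\<dots> = exp (real N * \<delta>) * r2 ^ N * (\<integral>x. Tn m p2 N F x / r2 ^ N \<partial>\<mu>1)"
    by (rule integral_mult_right_zero)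
  finally have 3: "(\<integral>x. Tn m p1 N F x \<partial>\<mu>1) \<le> exp (real N * \<delta>) * r2 ^ N * (\<integral>x. Tn m p2 N F x / r2 ^ N \<partial>\<mu>1)" .
  have 2: "(\<integral>x. F x \<partial>\<mu>1) \<le> exp (real N * \<delta>) * (r2 / r1) ^ N * (\<integral>x. Tn m p2 N F x / r2 ^ N \<partial>\<mu>1)"
  proof -
    have "(\<integral>x. F x \<partial>\<mu>1) \<le> (exp (real N * \<delta>) * r2 ^ N * (\<integral>x. Tn m p2 N F x / r2 ^ N \<partial>\<mu>1)) / r1 ^ N"
      unfolding 1 by (rule divide_right_mono[OF 3]) (use e1.rpos in simp)
    also have "\<dots> = exp (real N * \<delta>) * (r2 / r1) ^ N * (\<integral>x. Tn m p2 N F x / r2 ^ N \<partial>\<mu>1)"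
      by (simp add: power_divide divide_inverse mult_ac power_mult_distrib power_inverse)
    finally show ?thesis .
  qed
  have Gp: "0 \<le> (\<integral>x. Tn m p2 N F x / r2 ^ N \<partial>\<mu>1)" using e1.int_Cone_pos[OF G_Cone[OF F, of N]] by (rule less_imp_le)
  have "exp (real N * \<delta>) * (r2 / r1) ^ N * (\<integral>x. Tn m p2 N F x / r2 ^ N \<partial>\<mu>1)
      \<le> exp (real N * \<delta>) * exp (real N * \<delta>) * (\<integral>x. Tn m p2 N F x / r2 ^ N \<partial>\<mu>1)"
    using ratio_pow(1) Gp by (intro mult_right_mono mult_left_mono) auto
  with 2 show ?thesis by (simp add: power2_eq_square)
qed

lemma lower:
  assumes F: "Cone m b \<alpha> F"
  shows "(\<integral>x. Tn m p2 N F x / r2 ^ N \<partial>\<mu>1) \<le> exp (real N * \<delta>) ^ 2 * (\<integral>x. F x \<partial>\<mu>1)"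
proof -
  have Fnn: "\<forall>x\<in>Sigma_space m. 0 \<le> F x" using e1.Cone_pos[OF F] by (auto simp: less_imp_le)
  have "(\<integral>x. Tn m p1 N F x \<partial>\<mu>1) = r1 ^ N * (\<integral>x. F x \<partial>\<mu>1)"
    by (rule e1.int_Tn[OF e1.Cone_cont[OF F]])
  have "(\<integral>x. Tn m p2 N F x / r2 ^ N \<partial>\<mu>1) \<le> (\<integral>x. exp (real N * \<delta>) / r2 ^ N * Tn m p1 N F x \<partial>\<mu>1)"
  proof (rule e1.int_mono)
    show "integrable \<mu>1 (\<lambda>x. Tn m p2 N F x / r2 ^ N)" by (rule e1.integrable_Cone[OF G_Cone[OF F]])
    show "integrable \<mu>1 (\<lambda>x. exp (real N * \<delta>) / r2 ^ N * Tn m p1 N F x)"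
      by (rule e1.integrable_Cone[OF e1.Cone_scale[OF e1.Cone_Tn[OF e1.Hp F]]]) (use e2.rpos in simp)
    show "\<forall>x\<in>Sigma_space m. Tn m p2 N F x / r2 ^ N \<le> exp (real N * \<delta>) / r2 ^ N * Tn m p1 N F x"
    proof
      fix x assume x: "x \<in> Sigma_space m"
      have "Tn m p2 N F x \<le> exp (real N * \<delta>) * Tn m p1 N F x" using e1.Tn_cmp[OF c21 Fnn x] .
      then have "Tn m p2 N F x / r2 ^ N \<le> (exp (real N * \<delta>) * Tn m p1 N F x) / r2 ^ N"
        by (rule divide_right_mono) (use e2.rpos in simp)
      then show "Tn m p2 N F x / r2 ^ N \<le> exp (real N * \<delta>) / r2 ^ N * Tn m p1 N F x"
        by (simp only: times_divide_eq_left)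
    qed
  qed
  also have "\<dots> = exp (real N * \<delta>) / r2 ^ N * (r1 ^ N * (\<integral>x. F x \<partial>\<mu>1))"
    using e1.int_Tn[OF e1.Cone_cont[OF F]] by simp
  also have "\<dots> = exp (real N * \<delta>) * (r1 / r2) ^ N * (\<integral>x. F x \<partial>\<mu>1)"
    by (simp add: power_divide divide_inverse mult_ac power_mult_distrib power_inverse)
  also have "\<dots> \<le> exp (real N * \<delta>) * exp (real N * \<delta>) * (\<integral>x. F x \<partial>\<mu>1)"
    using ratio_pow(2) e1.int_Cone_pos[OF F] by (intro mult_right_mono mult_left_mono) auto
  finally show ?thesis by (simp add: power2_eq_square)
qed

lemma eq2:
  assumes F: "Cone m b \<alpha> F"
  shows "(\<integral>x. Tn m p2 N F x / r2 ^ N \<partial>\<mu>2) = (\<integral>x. F x \<partial>\<mu>2)"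
  using e2.int_Tn[OF e1.Cone_cont[OF F], of N] e2.rpos by simp

lemma Gmix:
  assumes F: "Cone m b \<alpha> F"
    and k: "exp (2 * Kc b \<alpha> k) \<le> 1 + exp (- 3 * Kc b \<alpha> 0) / 2"
  shows "\<forall>x\<in>Sigma_space m. \<forall>y\<in>Sigma_space m.
     (Tn m p2 (j * k) F x / r2 ^ (j * k)) / h2 x \<le>
     (1 + (1 - exp (- 3 * Kc b \<alpha> 0) / 2) ^ j * (exp (2 * Kc b \<alpha> 0) - 1)
          + 2 * (exp (2 * Kc b \<alpha> k) - 1) / exp (- 3 * Kc b \<alpha> 0)) *
     ((Tn m p2 (j * k) F y / r2 ^ (j * k)) / h2 y)"
proof (intro ballI)
  fix x y assume x: "x \<in> Sigma_space m" and y: "y \<in> Sigma_space m"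
  have M: "Tn m p2 (j * k) F x / Tn m p2 (j * k) h2 x \<le>
     (1 + (1 - exp (- 3 * Kc b \<alpha> 0) / 2) ^ j * (exp (2 * Kc b \<alpha> 0) - 1) + 2 * (exp (2 * Kc b \<alpha> k) - 1) / exp (- 3 * Kc b \<alpha> 0)) *
     (Tn m p2 (j * k) F y / Tn m p2 (j * k) h2 y)"
    by (rule e1.mix[OF e2.Hp F e2.hC k x y])
  have ex: "Tn m p2 (j * k) h2 x = r2 ^ (j * k) * h2 x" by (rule e1.Tn_eig[OF e2.heig x])
  have ey: "Tn m p2 (j * k) h2 y = r2 ^ (j * k) * h2 y" by (rule e1.Tn_eig[OF e2.heig y])
  have eqx: "(Tn m p2 (j * k) F x / r2 ^ (j * k)) / h2 x = Tn m p2 (j * k) F x / Tn m p2 (j * k) h2 x"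
    by (simp only: ex divide_divide_eq_left)
  have eqy: "(Tn m p2 (j * k) F y / r2 ^ (j * k)) / h2 y = Tn m p2 (j * k) F y / Tn m p2 (j * k) h2 y"
    by (simp only: ey divide_divide_eq_left)
  show "(Tn m p2 (j * k) F x / r2 ^ (j * k)) / h2 x \<le>
     (1 + (1 - exp (- 3 * Kc b \<alpha> 0) / 2) ^ j * (exp (2 * Kc b \<alpha> 0) - 1)
          + 2 * (exp (2 * Kc b \<alpha> k) - 1) / exp (- 3 * Kc b \<alpha> 0)) *
     ((Tn m p2 (j * k) F y / r2 ^ (j * k)) / h2 y)" unfolding eqx eqy by (rule M)
qed

end

context pair
begin

lemma Q_ge1:
  "1 \<le> 1 + (1 - exp (- 3 * Kc b \<alpha> 0) / 2) ^ j * (exp (2 * Kc b \<alpha> 0) - 1) + 2 * (exp (2 * Kc b \<alpha> k) - 1) / exp (- 3 * Kc b \<alpha> 0)"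
proof -
  have "exp (- 3 * Kc b \<alpha> 0) \<le> 1" by (rule e1.eps_le1)
  then have "0 \<le> 1 - exp (- 3 * Kc b \<alpha> 0) / 2" by linarith
  then have "0 \<le> (1 - exp (- 3 * Kc b \<alpha> 0) / 2) ^ j" by (rule zero_le_power)
  moreover have "0 \<le> exp (2 * Kc b \<alpha> 0) - 1" using e1.K_nonneg[of 0] by simp
  moreover have "0 \<le> 2 * (exp (2 * Kc b \<alpha> k) - 1) / exp (- 3 * Kc b \<alpha> 0)" using e1.K_nonneg[of k] by simp
  ultimately show ?thesis by simp
qed

lemma closeness:
  assumes F: "Cone m b \<alpha> F"
    and k: "exp (2 * Kc b \<alpha> k) \<le> 1 + exp (- 3 * Kc b \<alpha> 0) / 2"
  shows "(\<integral>x. F x \<partial>\<mu>1) \<le> exp (real (j * k) * \<delta>) ^ 4 *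
     (1 + (1 - exp (- 3 * Kc b \<alpha> 0) / 2) ^ j * (exp (2 * Kc b \<alpha> 0) - 1) + 2 * (exp (2 * Kc b \<alpha> k) - 1) / exp (- 3 * Kc b \<alpha> 0)) ^ 4
     * (\<integral>x. F x \<partial>\<mu>2)"
proof -
  define Q where "Q = 1 + (1 - exp (- 3 * Kc b \<alpha> 0) / 2) ^ j * (exp (2 * Kc b \<alpha> 0) - 1) + 2 * (exp (2 * Kc b \<alpha> k) - 1) / exp (- 3 * Kc b \<alpha> 0)"
  define N where "N = j * k"
  define X where "X = exp (real N * \<delta>)"
  have Q1: "1 \<le> Q" unfolding Q_def by (rule Q_ge1)
  have X: "0 < X" unfolding X_def by simp
  obtain y0 where y0: "y0 \<in> Sigma_space m" using e1.S_nonempty by blast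
  define a where "a = (\<integral>x. h2 x \<partial>\<mu>1)"
  have a: "0 < a" unfolding a_def by (rule e1.int_Cone_pos[OF e2.hC])
  have one: "Cone m b \<alpha> (\<lambda>_. 1)" by (rule e1.Cone_const) simp
  define k1 where "k1 = (Tn m p2 N (\<lambda>_. 1) y0 / r2 ^ N) / h2 y0"
  have gm1: "\<forall>x\<in>Sigma_space m. \<forall>y\<in>Sigma_space m. (Tn m p2 N (\<lambda>_. 1) x / r2 ^ N) / h2 x \<le> Q * ((Tn m p2 N (\<lambda>_. 1) y / r2 ^ N) / h2 y)"
    using Gmix[OF one k, of j] unfolding Q_def N_def by simp
  have s1: "k1 / Q * a \<le> (\<integral>x. Tn m p2 N (\<lambda>_. 1) x / r2 ^ N \<partial>\<mu>1)"
    using e1.sandwich(2)[OF G_Cone[OF one] e2.hC _ gm1 y0] Q1 unfolding k1_def a_def by simp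
  have l1: "(\<integral>x. Tn m p2 N (\<lambda>_. 1) x / r2 ^ N \<partial>\<mu>1) \<le> X ^ 2"
    using lower[OF one, of N] prob_space.prob_space[OF e1.prob] unfolding X_def by simp
  have s2: "(\<integral>x. Tn m p2 N (\<lambda>_. 1) x / r2 ^ N \<partial>\<mu>2) \<le> Q * k1 * 1"
    using e2.sandwich(1)[OF G_Cone[OF one] e2.hC _ gm1 y0] Q1 e2.hnorm unfolding k1_def by simp
  have e21: "(\<integral>x. Tn m p2 N (\<lambda>_. 1) x / r2 ^ N \<partial>\<mu>2) = 1"
    by (rule trans[OF eq2[OF one, of N] e2.int_const])
  have k1pos: "0 < k1" unfolding k1_def
    by (rule divide_pos_pos[OF e1.Cone_pos[OF G_Cone[OF one, of N] y0] e1.Cone_pos[OF e2.hC y0]])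
  have k1Q: "1 \<le> Q * k1" using s2 e21 by linarith
  have ka: "k1 * a \<le> Q * X ^ 2"
  proof -
    have "k1 / Q * a \<le> X ^ 2" using s1 l1 by linarith
    then show ?thesis using Q1 by (simp add: field_simps)
  qed
  have aQ: "a \<le> Q ^ 2 * X ^ 2"
  proof -
    have "a = (Q * k1) * a / (Q * k1)" using k1pos Q1 by simp
    also have "\<dots> \<le> (Q * k1) * a" using k1Q a by (simp add: divide_le_eq)
    also have "\<dots> = Q * (k1 * a)" by simp
    also have "\<dots> \<le> Q * (Q * X ^ 2)" using ka Q1 by (intro mult_left_mono) auto
    finally show ?thesis by (simp add: power2_eq_square mult_ac)
  qed
  define kF where "kF = (Tn m p2 N F y0 / r2 ^ N) / h2 y0"
  have gmF: "\<forall>x\<in>Sigma_space m. \<forall>y\<in>Sigma_space m. (Tn m p2 N F x / r2 ^ N) / h2 x \<le> Q * ((Tn m p2 N F y / r2 ^ N) / h2 y)"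
    using Gmix[OF F k, of j] unfolding Q_def N_def by simp
  have sF1: "(\<integral>x. Tn m p2 N F x / r2 ^ N \<partial>\<mu>1) \<le> Q * kF * a"
    using e1.sandwich(1)[OF G_Cone[OF F] e2.hC _ gmF y0] Q1 unfolding kF_def a_def by simp
  have sF2: "kF / Q * 1 \<le> (\<integral>x. F x \<partial>\<mu>2)"
    using e2.sandwich(2)[OF G_Cone[OF F] e2.hC _ gmF y0] Q1 e2.hnorm eq2[OF F, of N] unfolding kF_def by simp
  have kFpos: "0 < kF" unfolding kF_def
    by (rule divide_pos_pos[OF e1.Cone_pos[OF G_Cone[OF F, of N] y0] e1.Cone_pos[OF e2.hC y0]])
  have kFb: "kF \<le> Q * (\<integral>x. F x \<partial>\<mu>2)" using sF2 Q1 by (simp add: field_simps)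
  have "(\<integral>x. F x \<partial>\<mu>1) \<le> X ^ 2 * (\<integral>x. Tn m p2 N F x / r2 ^ N \<partial>\<mu>1)"
    using upper[OF F, of N] unfolding X_def .
  also have "\<dots> \<le> X ^ 2 * (Q * kF * a)" using sF1 X by (intro mult_left_mono) auto
  also have "\<dots> \<le> X ^ 2 * (Q * (Q * (\<integral>x. F x \<partial>\<mu>2)) * (Q ^ 2 * X ^ 2))"
    using kFb aQ Q1 kFpos a X by (intro mult_left_mono mult_mono) auto
  also have "\<dots> = X ^ 4 * Q ^ 4 * (\<integral>x. F x \<partial>\<mu>2)"
    by (simp add: power_numeral_reduce mult_ac eval_nat_numeral)
  finally show ?thesis unfolding X_def Q_def N_def .
qed


lemma h_ratio:
  assumes k: "exp (2 * Kc b \<alpha> k) \<le> 1 + exp (- 3 * Kc b \<alpha> 0) / 2"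
    and Phi: "(\<integral>x. h1 x \<partial>\<mu>2) \<le> \<Phi>" and x: "x \<in> Sigma_space m"
  shows "h1 x \<le> exp (real (j * k) * \<delta>) ^ 2 *
     (1 + (1 - exp (- 3 * Kc b \<alpha> 0) / 2) ^ j * (exp (2 * Kc b \<alpha> 0) - 1) + 2 * (exp (2 * Kc b \<alpha> k) - 1) / exp (- 3 * Kc b \<alpha> 0))
     * \<Phi> * h2 x"
proof -
  define Q where "Q = 1 + (1 - exp (- 3 * Kc b \<alpha> 0) / 2) ^ j * (exp (2 * Kc b \<alpha> 0) - 1) + 2 * (exp (2 * Kc b \<alpha> k) - 1) / exp (- 3 * Kc b \<alpha> 0)"
  define N where "N = j * k"
  define X where "X = exp (real N * \<delta>)"
  have Q1: "1 \<le> Q" unfolding Q_def by (rule Q_ge1)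
  have X: "0 < X" unfolding X_def by simp
  define G where "G = Tn m p2 N h1 x / r2 ^ N"
  have h1e: "Tn m p1 N h1 x = r1 ^ N * h1 x" by (rule e1.Tn_eig[OF e1.heig x])
  have hnn: "\<forall>x\<in>Sigma_space m. 0 \<le> h1 x" using e1.Cone_pos[OF e1.hC] by (auto simp: less_imp_le)
  have t: "Tn m p1 N h1 x \<le> X * Tn m p2 N h1 x" unfolding X_def by (rule e1.Tn_cmp[OF c12 hnn x])
  have Gp: "0 \<le> G" unfolding G_def using e1.Cone_pos[OF G_Cone[OF e1.hC, of N] x] by simp
  have "h1 x = Tn m p1 N h1 x / r1 ^ N" using h1e e1.rpos by simp
  also have "\<dots> \<le> X * Tn m p2 N h1 x / r1 ^ N" using t e1.rpos by (intro divide_right_mono) auto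
  also have "\<dots> = X * (r2 / r1) ^ N * G" unfolding G_def using e2.rpos e1.rpos
    by (simp add: power_divide field_simps)
  also have "\<dots> \<le> X * X * G" using ratio_pow(1)[of N] X Gp unfolding X_def by (intro mult_right_mono mult_left_mono) auto
  finally have 1: "h1 x \<le> X * X * G" .
  have gm: "\<forall>x\<in>Sigma_space m. \<forall>y\<in>Sigma_space m. (Tn m p2 N h1 x / r2 ^ N) / h2 x \<le> Q * ((Tn m p2 N h1 y / r2 ^ N) / h2 y)"
    using Gmix[OF e1.hC k, of j] unfolding Q_def N_def by simp
  have "(G / h2 x) / Q * 1 \<le> (\<integral>y. Tn m p2 N h1 y / r2 ^ N \<partial>\<mu>2)"
    using e2.sandwich(2)[OF G_Cone[OF e1.hC] e2.hC _ gm x] Q1 e2.hnorm unfolding G_def by simp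
  also have "\<dots> = (\<integral>y. h1 y \<partial>\<mu>2)" by (rule eq2[OF e1.hC])
  finally have "(G / h2 x) / Q \<le> \<Phi>" using Phi by simp
  then have 2: "G \<le> Q * \<Phi> * h2 x" using Q1 e1.Cone_pos[OF e2.hC x] by (simp add: field_simps)
  have "h1 x \<le> X * X * (Q * \<Phi> * h2 x)" using 1 2 X by (smt (verit) mult_left_mono mult_pos_pos)
  then show ?thesis unfolding X_def Q_def N_def by (simp add: power2_eq_square mult_ac)
qed

lemma cyl_ratio:
  assumes Psi: "\<And>F. Cone m b \<alpha> F \<Longrightarrow> (\<integral>x. F x \<partial>\<mu>1) \<le> \<Psi> * (\<integral>x. F x \<partial>\<mu>2)"
    and Psi0: "0 \<le> \<Psi>" and w: "w \<in> words m"
  shows "measure \<mu>1 (cyl m w) \<le> exp (real (length w) * \<delta>) ^ 2 * \<Psi> * measure \<mu>2 (cyl m w)"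
proof -
  define n where "n = length w"
  define X where "X = exp (real n * \<delta>)"
  have X: "0 < X" unfolding X_def by simp
  have F2: "Cone m b \<alpha> (\<lambda>x. exp (Sw p2 w x))" by (rule e1.Cone_expSw[OF e2.Hp w])
  have F1: "Cone m b \<alpha> (\<lambda>x. exp (Sw p1 w x))" by (rule e1.Cone_expSw[OF e1.Hp w])
  have m1: "measure \<mu>1 (cyl m w) = (\<integral>x. exp (Sw p1 w x) \<partial>\<mu>1) / r1 ^ n"
    unfolding n_def by (rule e1.cyl_meas[OF w])
  have m2: "measure \<mu>2 (cyl m w) = (\<integral>x. exp (Sw p2 w x) \<partial>\<mu>2) / r2 ^ n"
    unfolding n_def by (rule e2.cyl_meas[OF w])
  have "(\<integral>x. exp (Sw p1 w x) \<partial>\<mu>1) \<le> (\<integral>x. X * exp (Sw p2 w x) \<partial>\<mu>1)"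
  proof (rule e1.int_mono)
    show "integrable \<mu>1 (\<lambda>x. exp (Sw p1 w x))" by (rule e1.integrable_Cone[OF F1])
    show "integrable \<mu>1 (\<lambda>x. X * exp (Sw p2 w x))" by (rule e1.integrable_Cone[OF e1.Cone_scale[OF F2 X]])
    show "\<forall>x\<in>Sigma_space m. exp (Sw p1 w x) \<le> X * exp (Sw p2 w x)"
    proof
      fix x assume x: "x \<in> Sigma_space m"
      have "Sw p1 w x \<le> Sw p2 w x + real n * \<delta>" unfolding n_def by (rule e1.Sw_cmp[OF c12 x w])
      then show "exp (Sw p1 w x) \<le> X * exp (Sw p2 w x)" unfolding X_def by (simp add: exp_add[symmetric] add.commute)
    qed
  qed
  also have "\<dots> = X * (\<integral>x. exp (Sw p2 w x) \<partial>\<mu>1)" by simp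
  also have "\<dots> \<le> X * (\<Psi> * (\<integral>x. exp (Sw p2 w x) \<partial>\<mu>2))" using Psi[OF F2] X by (intro mult_left_mono) auto
  also have "\<dots> = X * \<Psi> * r2 ^ n * measure \<mu>2 (cyl m w)" using m2 e2.rpos by simp
  finally have 1: "(\<integral>x. exp (Sw p1 w x) \<partial>\<mu>1) \<le> X * \<Psi> * r2 ^ n * measure \<mu>2 (cyl m w)" .
  have mp: "0 \<le> measure \<mu>2 (cyl m w)" by simp
  have "measure \<mu>1 (cyl m w) \<le> X * \<Psi> * r2 ^ n * measure \<mu>2 (cyl m w) / r1 ^ n"
    unfolding m1 using 1 e1.rpos by (intro divide_right_mono) auto
  also have "\<dots> = X * \<Psi> * (r2 / r1) ^ n * measure \<mu>2 (cyl m w)"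
    by (simp add: power_divide divide_inverse mult_ac power_mult_distrib power_inverse)
  also have "\<dots> \<le> X * \<Psi> * X * measure \<mu>2 (cyl m w)"
    using ratio_pow(1)[of n] X Psi0 mp unfolding X_def by (intro mult_right_mono mult_left_mono) auto
  finally show ?thesis unfolding X_def n_def by (simp add: power2_eq_square mult_ac)
qed

end

lemma ln_sq_bound:
  fixes d t :: real
  assumes d: "0 < d" "d \<le> 1" and t: "0 < t"
  shows "(ln (1 / d)) ^ 2 \<le> (4 / t ^ 2) * d powr (- t)"
proof -
  have y0: "0 \<le> ln (1 / d)" using d by simp
  have "ln ((1 / d) powr (t / 2)) = (t / 2) * ln (1 / d)" using d by (simp add: ln_powr)
  moreover have "ln ((1 / d) powr (t / 2)) \<le> (1 / d) powr (t / 2)"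
    using ln_le_minus_one[of "(1 / d) powr (t / 2)"] d by simp
  ultimately have "(t / 2) * ln (1 / d) \<le> (1 / d) powr (t / 2)" by simp
  then have 1: "ln (1 / d) \<le> (2 / t) * (1 / d) powr (t / 2)" using t by (simp add: field_simps)
  have "(ln (1 / d)) ^ 2 \<le> ((2 / t) * (1 / d) powr (t / 2)) ^ 2"
    using 1 y0 by (rule power_mono)
  also have "\<dots> = (4 / t ^ 2) * ((1 / d) powr (t / 2)) ^ 2" by (simp add: power_mult_distrib power_divide)
  also have "((1 / d) powr (t / 2)) ^ 2 = (1 / d) powr t"
    using d by (simp add: powr_realpow[symmetric] powr_powr)
  also have "(1 / d) powr t = d powr (- t)" using d by (simp add: powr_minus_divide powr_divide)
  finally show ?thesis .
qed

lemma ln_sq_bound':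
  fixes d t \<theta> \<theta>' :: real
  assumes d: "0 < d" and t: "t = \<theta> - \<theta>'" "0 < t"
  shows "(ln (max 1 (1 / d))) ^ 2 * d powr \<theta> \<le> (4 / t ^ 2) * d powr \<theta>'"
proof (cases "d \<le> 1")
  case True
  then have "max 1 (1 / d) = 1 / d" using d by simp
  then have "(ln (max 1 (1 / d))) ^ 2 * d powr \<theta> \<le> ((4 / t ^ 2) * d powr (- t)) * d powr \<theta>"
    using ln_sq_bound[OF d True t(2)] by (intro mult_right_mono) auto
  also have "\<dots> = (4 / t ^ 2) * d powr \<theta>'" using t by (simp add: powr_add[symmetric])
  finally show ?thesis .
next
  case False
  then have "max 1 (1 / d) = 1" using d by (simp add: field_simps)
  then show ?thesis using t by simp
qed

lemma pow_choose:
  fixes \<beta> \<theta>' d :: real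
  assumes b: "0 < \<beta>" "\<beta> < 1" and th: "0 < \<theta>'" and d: "0 < d" and s: "\<theta>' / (- ln \<beta>) * ln (max 1 (1 / d)) \<le> real s"
  shows "\<beta> ^ s \<le> d powr \<theta>'"
proof -
  have lb: "ln \<beta> < 0" using b by simp
  define M where "M = max 1 (1 / d)"
  have M: "1 \<le> M" "0 < M" unfolding M_def by auto
  have "\<beta> ^ s = exp (real s * ln \<beta>)" using b by (simp add: exp_of_nat_mult)
  also have "\<dots> \<le> exp ((\<theta>' / (- ln \<beta>) * ln M) * ln \<beta>)"
    using s lb unfolding M_def by (intro exp_mono mult_right_mono_neg) auto
  also have "(\<theta>' / (- ln \<beta>) * ln M) * ln \<beta> = - \<theta>' * ln M" using lb by (simp add: field_simps)
  also have "exp (- \<theta>' * ln M) = M powr (- \<theta>')" using M by (simp add: powr_def)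
  also have "\<dots> \<le> d powr \<theta>'"
  proof (cases "d \<le> 1")
    case True
    then have "M = 1 / d" using d by (simp add: M_def)
    then show ?thesis using d by (simp add: powr_minus_divide powr_divide)
  next
    case False
    then have "M = 1" using d by (simp add: M_def field_simps)
    moreover have "1 \<le> d powr \<theta>'" using False th by (simp add: ge_one_powr_ge_zero)
    ultimately show ?thesis by simp
  qed
  finally show ?thesis .
qed

lemma onepow_le_exp: "0 \<le> (E::real) \<Longrightarrow> (1 + E) ^ n \<le> exp (real n * E)"
proof -
  assume "0 \<le> E"
  then have "(1 + E) ^ n \<le> exp E ^ n" by (intro power_mono) (use exp_ge_add_one_self[of E] in auto)
  then show ?thesis by (simp add: exp_of_nat_mult)
qed

theorem mainTheorem15:
  fixes m :: nat
    and U :: "(real ^ 'd) set"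
    and phi :: "real ^ 'd \<Rightarrow> (nat \<Rightarrow> nat) \<Rightarrow> real"
    and \<alpha> b c \<theta> :: real
    and h :: "real ^ 'd \<Rightarrow> (nat \<Rightarrow> nat) \<Rightarrow> real"
    and \<nu> :: "real ^ 'd \<Rightarrow> (nat \<Rightarrow> nat) measure"
  assumes U_open: "open U" and U_bounded: "bounded U"
    and H1_const: "0 < \<alpha>" "\<alpha> < 1" "0 < b"
    and H1: "\<And>l x y. l \<in> closure U \<Longrightarrow> x \<in> Sigma_space m \<Longrightarrow> y \<in> Sigma_space m \<Longrightarrow> x \<noteq> y \<Longrightarrow>
              \<bar>phi l x - phi l y\<bar> \<le> b * \<alpha> ^ cpl x y"
    and H2_const: "0 < c" "0 < \<theta>" "\<theta> < 1"
    and H2: "\<And>l l' x. l \<in> closure U \<Longrightarrow> l' \<in> closure U \<Longrightarrow> x \<in> Sigma_space m \<Longrightarrow>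
              \<bar>phi l x - phi l' x\<bar> \<le> c * dist l l' powr \<theta>"
    and h_cont: "\<And>l. l \<in> closure U \<Longrightarrow> continuous_on (Sigma_space m) (h l)"
    and h_Lambda: "\<And>l. l \<in> closure U \<Longrightarrow> h l \<in> Lambda_cone m b \<alpha>"
    and h_eig: "\<And>l x. l \<in> closure U \<Longrightarrow> x \<in> Sigma_space m \<Longrightarrow>
              transfer m (phi l) (h l) x = exp (pressure m (phi l)) * h l x"
    and \<nu>_prob: "\<And>l. l \<in> closure U \<Longrightarrow> prob_space (\<nu> l)"
    and \<nu>_sets: "\<And>l. l \<in> closure U \<Longrightarrow> sets (\<nu> l) = sets (Sigma_M m)"
    and \<nu>_eig: "\<And>l f. l \<in> closure U \<Longrightarrow> continuous_on (Sigma_space m) f \<Longrightarrow>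
              (\<integral>x. transfer m (phi l) f x \<partial>\<nu> l) = exp (pressure m (phi l)) * (\<integral>x. f x \<partial>\<nu> l)"
    and h_norm: "\<And>l. l \<in> closure U \<Longrightarrow> (\<integral>x. h l x \<partial>\<nu> l) = 1"
  shows "\<forall>\<theta>'. 0 < \<theta>' \<and> \<theta>' < \<theta> \<longrightarrow>
           (\<exists>C>0. \<forall>l\<in>U. \<forall>l'\<in>U.
              (\<forall>x\<in>Sigma_space m. h l x / h l' x \<le> exp (C * dist l l' powr \<theta>')) \<and>
              (\<forall>w\<in>words m. measure (\<nu> l) (cyl m w) / measure (\<nu> l') (cyl m w)
                   \<le> exp (C * dist l l' powr \<theta>' * real (length w))))"
proof (intro allI impI)
  fix \<theta>' :: real assume th': "0 < \<theta>' \<and> \<theta>' < \<theta>"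
  show "\<exists>C>0. \<forall>l\<in>U. \<forall>l'\<in>U.
              (\<forall>x\<in>Sigma_space m. h l x / h l' x \<le> exp (C * dist l l' powr \<theta>')) \<and>
              (\<forall>w\<in>words m. measure (\<nu> l) (cyl m w) / measure (\<nu> l') (cyl m w)
                   \<le> exp (C * dist l l' powr \<theta>' * real (length w)))"
  proof (cases "U = {}")
    case True
    then show ?thesis by (intro exI[of _ 1]) auto
  next
    case False
    then obtain l0 where l0: "l0 \<in> U" by blast
    have l0c: "l0 \<in> closure U" using l0 closure_subset by blast
    have spl: "space (\<nu> l) = Sigma_space m" if "l \<in> closure U" for l
      using sets_eq_imp_space_eq[OF \<nu>_sets[OF that]] by (simp add: space_SM)
    have m1: "1 \<le> m"
    proof (rule ccontr)
      assume "\<not> 1 \<le> m"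
      then have "Sigma_space m = {}" by (auto simp: Sigma_space_def)
      then show False using prob_space.not_empty[OF \<nu>_prob[OF l0c]] spl[OF l0c] by simp
    qed
    interpret ctx m b \<alpha> using m1 H1_const by unfold_locales auto
    have Hl: "Hol m b \<alpha> (phi l)" if "l \<in> closure U" for l
      using H1[OF that] by (auto simp: Hol_def)
    have Cl: "Cone m b \<alpha> (h l)" if l: "l \<in> closure U" for l
    proof -
      have "\<exists>x0\<in>S. 0 < h l x0"
      proof (rule ccontr)
        assume "\<not> (\<exists>x0\<in>S. 0 < h l x0)"
        then have "\<forall>x\<in>S. h l x = 0" using h_Lambda[OF l] by (force simp: Lambda_cone_def)
        then have "(\<integral>x. h l x \<partial>\<nu> l) = (\<integral>x. 0 \<partial>\<nu> l)"
          by (intro Bochner_Integration.integral_cong) (auto simp: spl[OF l])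
        then show False using h_norm[OF l] by simp
      qed
      then show ?thesis using Lambda_Cone[OF h_Lambda[OF l]] by blast
    qed
    have El: "eig m b \<alpha> (\<nu> l) (phi l) (h l) (exp (pressure m (phi l)))" if l: "l \<in> closure U" for l
    proof (intro eig.intro meas.intro meas_axioms.intro eig_axioms.intro)
      show "ctx m b \<alpha>" using m1 H1_const by (simp add: ctx_def)
      show "prob_space (\<nu> l)" by (rule \<nu>_prob[OF l])
      show "sets (\<nu> l) = sets (Sigma_M m)" by (rule \<nu>_sets[OF l])
      show "Hol m b \<alpha> (phi l)" by (rule Hl[OF l])
      show "Cone m b \<alpha> (h l)" by (rule Cl[OF l])
      show "0 < exp (pressure m (phi l))" by simp
      show "\<forall>x\<in>S. transfer m (phi l) (h l) x = exp (pressure m (phi l)) * h l x" using h_eig[OF l] by blast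
      show "\<And>f. continuous_on S f \<Longrightarrow> (\<integral>x. transfer m (phi l) f x \<partial>\<nu> l) = exp (pressure m (phi l)) * (\<integral>x. f x \<partial>\<nu> l)"
        by (rule \<nu>_eig[OF l])
      show "(\<integral>x. h l x \<partial>\<nu> l) = 1" by (rule h_norm[OF l])
    qed
    have Pl: "pair m b \<alpha> (\<nu> l) (phi l) (h l) (exp (pressure m (phi l))) (\<nu> l') (phi l') (h l') (exp (pressure m (phi l'))) (c * dist l l' powr \<theta>)"
      if l: "l \<in> closure U" and l': "l' \<in> closure U" for l l'
    proof (rule pair.intro[OF El[OF l] El[OF l']], intro pair_axioms.intro)
      show "\<forall>x\<in>S. \<bar>phi l x - phi l' x\<bar> \<le> c * dist l l' powr \<theta>" using H2[OF l l'] by blast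
    qed
    define K0v where "K0v = Kc b \<alpha> 0"
    define ev where "ev = exp (- 3 * K0v)"
    define q where "q = 1 - ev / 2"
    define \<beta> where "\<beta> = max q \<alpha>"
    define A' where "A' = (2 * b * \<alpha> / (1 - \<alpha>)) * exp K0v"
    define E0 where "E0 = exp (2 * K0v) - 1"
    define C3 where "C3 = 2 * A' * (exp K0v + 1) / ev"
    have K0v: "0 \<le> K0v" unfolding K0v_def by (rule K_nonneg)
    have ev: "0 < ev" "ev \<le> 1" unfolding ev_def K0v_def using eps_le1 by auto
    have q: "0 < q" "q < 1" unfolding q_def using ev by auto
    have \<beta>: "0 < \<beta>" "\<beta> < 1" "q \<le> \<beta>" "\<alpha> \<le> \<beta>" unfolding \<beta>_def using q a0 a1 by auto
    have A': "0 \<le> A'" unfolding A'_def using a0 a1 b0 by simp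
    have E0: "0 \<le> E0" unfolding E0_def using K0v by simp
    have C3: "0 \<le> C3" unfolding C3_def using A' ev by simp
    have expk: "exp (2 * K k) - 1 \<le> A' * (exp K0v + 1) * \<alpha> ^ k" for k
    proof -
      have "exp (2 * K k) - 1 = (exp (K k) - 1) * (exp (K k) + 1)"
        by (simp add: algebra_simps exp_add[symmetric])
      also have "\<dots> \<le> (A' * \<alpha> ^ k) * (exp K0v + 1)"
      proof (rule mult_mono)
        show "exp (K k) - 1 \<le> A' * \<alpha> ^ k" using expK_small[of k] unfolding A'_def K0v_def by (simp add: mult_ac)
        show "exp (K k) + 1 \<le> exp K0v + 1" using K_mono[of 0 k] unfolding K0v_def by simp
        show "0 \<le> A' * \<alpha> ^ k" using A' a0 by simp
        show "0 \<le> exp (K k) + 1" by (simp add: add_nonneg_nonneg less_imp_le)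
      qed
      finally show ?thesis by (simp add: mult_ac)
    qed
    define A2 where "A2 = A' * (exp K0v + 1)"
    have A2: "0 \<le> A2" unfolding A2_def using A' by simp
    obtain k0 where k0: "\<alpha> ^ k0 < (ev / 2) / (A2 + 1)"
      using real_arch_pow_inv[of "(ev / 2) / (A2 + 1)" \<alpha>] ev A2 a1 by auto
    have kgood: "exp (2 * K k) \<le> 1 + exp (- 3 * Kc b \<alpha> 0) / 2" if "k0 \<le> k" for k
    proof -
      have "\<alpha> ^ k \<le> \<alpha> ^ k0" using that a0 a1 by (intro power_decreasing) auto
      then have "A2 * \<alpha> ^ k \<le> (A2 + 1) * \<alpha> ^ k0" using A2 a0
        by (smt (verit, best) mult_left_mono mult_right_mono zero_le_power)
      also have "\<dots> \<le> ev / 2" using k0 A2 by (simp add: field_simps)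
      finally have "A2 * \<alpha> ^ k \<le> ev / 2" .
      then show ?thesis using expk[of k] unfolding A2_def ev_def K0v_def by linarith
    qed
    have Ebd: "2 * (exp (2 * K k) - 1) / ev \<le> C3 * \<alpha> ^ k" for k
    proof -
      have "2 * (exp (2 * K k) - 1) \<le> 2 * (A' * (exp K0v + 1) * \<alpha> ^ k)" using expk[of k] by simp
      then have "2 * (exp (2 * K k) - 1) / ev \<le> 2 * (A' * (exp K0v + 1) * \<alpha> ^ k) / ev"
        using ev by (intro divide_right_mono) auto
      also have "\<dots> = C3 * \<alpha> ^ k" unfolding C3_def by simp
      finally show ?thesis .
    qed
    obtain Dm0 where Dm0: "\<forall>x\<in>U. \<forall>y\<in>U. dist x y \<le> Dm0" using U_bounded bounded_two_points by blast
    define Dm where "Dm = max 1 Dm0"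
    have Dm: "1 \<le> Dm" "\<And>x y. x \<in> U \<Longrightarrow> y \<in> U \<Longrightarrow> dist x y \<le> Dm" unfolding Dm_def using Dm0 by force+
    define t where "t = \<theta> - \<theta>'"
    have t: "0 < t" unfolding t_def using th' by simp
    define As where "As = \<theta>' / (- ln \<beta>)"
    have As: "0 < As" unfolding As_def using \<beta> th' by (simp add: divide_pos_neg)
    define C4 where "C4 = c * (2 * (real k0 + 2) ^ 2 * Dm powr t + 4 * As ^ 2 * (4 / t ^ 2))"
    have C4: "0 \<le> C4" unfolding C4_def using H2_const by simp
    define C where "C = 6 * C4 + 5 * (E0 + C3) + 2 * c * Dm powr t + 1"
    have cD: "0 \<le> 2 * c * Dm powr t" using H2_const by simp
    have "0 \<le> 6 * C4 + 5 * (E0 + C3) + 2 * c * Dm powr t"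
      using C4 E0 C3 cD H2_const by (intro add_nonneg_nonneg mult_nonneg_nonneg) auto
    then have Cp: "0 < C" unfolding C_def by (rule add_nonneg_pos) simp
    show ?thesis
    proof (intro exI[of _ C] conjI[OF Cp] ballI)
      fix l l' assume l: "l \<in> U" and l': "l' \<in> U"
      have lc: "l \<in> closure U" and l'c: "l' \<in> closure U" using l l' closure_subset by blast+
      define d where "d = dist l l'"
      show "(\<forall>x\<in>Sigma_space m. h l x / h l' x \<le> exp (C * dist l l' powr \<theta>')) \<and>
            (\<forall>w\<in>words m. measure (\<nu> l) (cyl m w) / measure (\<nu> l') (cyl m w) \<le> exp (C * dist l l' powr \<theta>' * real (length w)))"
      proof (cases "d = 0")
        case True
        then have "l = l'" unfolding d_def by simp
        then show ?thesis by (simp add: divide_self_if)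
      next
        case False
        then have d: "0 < d" unfolding d_def by simp
        define L where "L = ln (max 1 (1 / d))"
        have L: "0 \<le> L" unfolding L_def by simp
        define s where "s = nat \<lceil>As * L\<rceil>"
        have s1: "As * L \<le> real s" unfolding s_def by linarith
        have s2: "real s \<le> As * L + 1"
        proof -
          have "0 \<le> As * L" using As L by simp
          then have "real s = of_int \<lceil>As * L\<rceil>" unfolding s_def by simp
          then show ?thesis by linarith
        qed
        define k where "k = k0 + s + 1"
        define N where "N = k * k"
        define \<delta> where "\<delta> = c * d powr \<theta>"
        have \<delta>0: "0 \<le> \<delta>" unfolding \<delta>_def using H2_const by simp
        have kk0: "k0 \<le> k" unfolding k_def by simp
        have bs: "\<beta> ^ s \<le> d powr \<theta>'"
          by (rule pow_choose[OF \<beta>(1,2) _ d]) (use th' s1 in \<open>auto simp: As_def L_def\<close>)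
        define E where "E = q ^ k * E0 + 2 * (exp (2 * K k) - 1) / ev"
        have Ebound: "E \<le> (E0 + C3) * d powr \<theta>'"
        proof -
          have "q ^ k \<le> \<beta> ^ k" using \<beta> q by (intro power_mono) auto
          also have "\<dots> \<le> \<beta> ^ s" using \<beta> unfolding k_def by (intro power_decreasing) auto
          finally have 1: "q ^ k \<le> d powr \<theta>'" using bs by linarith
          have "\<alpha> ^ k \<le> \<beta> ^ k" using \<beta> a0 by (intro power_mono) auto
          also have "\<dots> \<le> \<beta> ^ s" using \<beta> unfolding k_def by (intro power_decreasing) auto
          finally have 2: "\<alpha> ^ k \<le> d powr \<theta>'" using bs by linarith
          have "E \<le> d powr \<theta>' * E0 + C3 * \<alpha> ^ k"
            unfolding E_def using Ebd[of k] 1 E0 by (intro add_mono mult_right_mono) auto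
          also have "\<dots> \<le> d powr \<theta>' * E0 + C3 * d powr \<theta>'" using 2 C3 by (intro add_left_mono mult_left_mono) auto
          finally show ?thesis by (simp add: algebra_simps)
        qed
        have E: "0 \<le> E" unfolding E_def using q E0 K_nonneg[of k] ev by (intro add_nonneg_nonneg mult_nonneg_nonneg divide_nonneg_pos) auto
        have dth: "d powr \<theta> \<le> Dm powr t * d powr \<theta>'"
        proof -
          have "d powr \<theta> = d powr t * d powr \<theta>'" unfolding t_def by (simp add: powr_add[symmetric])
          also have "d powr t \<le> Dm powr t" using Dm(2)[OF l l'] t d unfolding d_def by (intro powr_mono2) auto
          then have "d powr t * d powr \<theta>' \<le> Dm powr t * d powr \<theta>'" by (intro mult_right_mono) auto
          finally show ?thesis .
        qed
        have Nd: "real N * \<delta> \<le> C4 * d powr \<theta>'"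
        proof -
          have rk: "real k \<le> (real k0 + 2) + As * L" unfolding k_def using s2 by simp
          have "real N = (real k) ^ 2" unfolding N_def by (simp add: power2_eq_square)
          also have "\<dots> \<le> ((real k0 + 2) + As * L) ^ 2" using rk by (intro power_mono) auto
          also have "\<dots> \<le> 2 * (real k0 + 2) ^ 2 + 2 * As ^ 2 * L ^ 2"
          proof -
            have "0 \<le> ((real k0 + 2) - As * L) ^ 2" by simp
            then show ?thesis by (simp add: power2_eq_square algebra_simps)
          qed
          finally have rN: "real N \<le> 2 * (real k0 + 2) ^ 2 + 2 * As ^ 2 * L ^ 2" .
          have "real N * \<delta> \<le> (2 * (real k0 + 2) ^ 2 + 2 * As ^ 2 * L ^ 2) * \<delta>"
            using rN \<delta>0 by (rule mult_right_mono)
          also have "\<dots> = c * (2 * (real k0 + 2) ^ 2 * d powr \<theta> + 2 * As ^ 2 * (L ^ 2 * d powr \<theta>))"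
            unfolding \<delta>_def by (simp add: algebra_simps)
          also have "\<dots> \<le> c * (2 * (real k0 + 2) ^ 2 * (Dm powr t * d powr \<theta>') + 2 * As ^ 2 * ((4 / t ^ 2) * d powr \<theta>'))"
          proof -
            have "L ^ 2 * d powr \<theta> \<le> (4 / t ^ 2) * d powr \<theta>'"
              unfolding L_def by (rule ln_sq_bound'[OF d t_def t])
            then show ?thesis using dth H2_const
              by (intro mult_left_mono add_mono) auto
          qed
          also have "\<dots> \<le> C4 * d powr \<theta>'"
          proof -
            have "c * (2 * (real k0 + 2) ^ 2 * (Dm powr t * d powr \<theta>') + 2 * As ^ 2 * ((4 / t ^ 2) * d powr \<theta>'))
                \<le> c * (2 * (real k0 + 2) ^ 2 * (Dm powr t * d powr \<theta>') + 4 * As ^ 2 * ((4 / t ^ 2) * d powr \<theta>'))"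
            proof -
              have "2 * As ^ 2 \<le> 4 * As ^ 2" by simp
              moreover have "0 \<le> (4 / t ^ 2) * d powr \<theta>'" by simp
              ultimately have "2 * As ^ 2 * ((4 / t ^ 2) * d powr \<theta>') \<le> 4 * As ^ 2 * ((4 / t ^ 2) * d powr \<theta>')"
                by (rule mult_right_mono)
              then show ?thesis using H2_const by (intro mult_left_mono add_left_mono) auto
            qed
            also have "\<dots> = C4 * d powr \<theta>'" unfolding C4_def by (simp add: algebra_simps)
            finally show ?thesis .
          qed
          finally show ?thesis .
        qed
        interpret P: pair m b \<alpha> "\<nu> l" "phi l" "h l" "exp (pressure m (phi l))" "\<nu> l'" "phi l'" "h l'" "exp (pressure m (phi l'))" "c * dist l l' powr \<theta>"
          by (rule Pl[OF lc l'c])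
        interpret P': pair m b \<alpha> "\<nu> l'" "phi l'" "h l'" "exp (pressure m (phi l'))" "\<nu> l" "phi l" "h l" "exp (pressure m (phi l))" "c * dist l' l powr \<theta>"
          by (rule Pl[OF l'c lc])
        have kg: "exp (2 * Kc b \<alpha> k) \<le> 1 + exp (- 3 * Kc b \<alpha> 0) / 2" by (rule kgood[OF kk0])
        define Qv where "Qv = 1 + E"
        have Qeq: "1 + (1 - exp (- 3 * Kc b \<alpha> 0) / 2) ^ k * (exp (2 * Kc b \<alpha> 0) - 1) + 2 * (exp (2 * Kc b \<alpha> k) - 1) / exp (- 3 * Kc b \<alpha> 0) = Qv"
          unfolding Qv_def E_def q_def ev_def E0_def K0v_def by simp
        define X where "X = exp (real N * \<delta>)"
        have X: "0 < X" unfolding X_def by simp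
        have Qv: "1 \<le> Qv" unfolding Qv_def using E by simp
        have deq: "c * dist l l' powr \<theta> = \<delta>" "c * dist l' l powr \<theta> = \<delta>"
          by (simp_all add: \<delta>_def d_def dist_commute)
        have rN: "real (k * k) = real N" unfolding N_def by simp
        have clos: "(\<integral>x. F x \<partial>\<nu> l) \<le> X ^ 4 * Qv ^ 4 * (\<integral>x. F x \<partial>\<nu> l')" if F: "Cone m b \<alpha> F" for F
          using P.closeness[OF F kg, of k] unfolding Qeq deq rN X_def .
        have clos': "(\<integral>x. F x \<partial>\<nu> l') \<le> X ^ 4 * Qv ^ 4 * (\<integral>x. F x \<partial>\<nu> l)" if F: "Cone m b \<alpha> F" for F
          using P'.closeness[OF F kg, of k] unfolding Qeq deq rN X_def .
        have Phi: "(\<integral>x. h l x \<partial>\<nu> l') \<le> X ^ 4 * Qv ^ 4"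
          using clos'[OF Cl[OF lc]] h_norm[OF lc] by simp
        have expbd: "X ^ a * Qv ^ b' \<le> exp (real a * (real N * \<delta>) + real b' * E)" for a b'
        proof -
          have "X ^ a = exp (real a * (real N * \<delta>))" unfolding X_def by (simp add: exp_of_nat_mult)
          moreover have "Qv ^ b' \<le> exp (real b' * E)" unfolding Qv_def by (rule onepow_le_exp[OF E])
          ultimately have "X ^ a * Qv ^ b' \<le> exp (real a * (real N * \<delta>)) * exp (real b' * E)"
            using X by (simp add: mult_left_mono)
          then show ?thesis by (simp add: exp_add)
        qed
        have dpos: "0 \<le> d powr \<theta>'" by simp
        have part1: "\<forall>x\<in>Sigma_space m. h l x / h l' x \<le> exp (C * dist l l' powr \<theta>')"
        proof
          fix x assume x: "x \<in> Sigma_space m"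
          have "h l x \<le> exp (real (k * k) * (c * dist l l' powr \<theta>)) ^ 2 *
             (1 + (1 - exp (- 3 * Kc b \<alpha> 0) / 2) ^ k * (exp (2 * Kc b \<alpha> 0) - 1) + 2 * (exp (2 * Kc b \<alpha> k) - 1) / exp (- 3 * Kc b \<alpha> 0))
             * (X ^ 4 * Qv ^ 4) * h l' x"
            by (rule P.h_ratio[OF kg Phi x])
          also have "\<dots> = (X ^ 6 * Qv ^ 5) * h l' x" unfolding Qeq deq rN X_def[symmetric]
            by (simp add: power_add[symmetric] mult_ac eval_nat_numeral)
          finally have 1: "h l x / h l' x \<le> X ^ 6 * Qv ^ 5"
            using Cone_pos[OF Cl[OF l'c] x] by (simp add: divide_le_eq)
          have "6 * (real N * \<delta>) + 5 * E \<le> 6 * (C4 * d powr \<theta>') + 5 * ((E0 + C3) * d powr \<theta>')"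
            using Nd Ebound by linarith
          also have "\<dots> \<le> C * d powr \<theta>'"
          proof -
            have z: "0 \<le> (2 * c * Dm powr t + 1) * d powr \<theta>'" using cD dpos by simp
            have "C * d powr \<theta>' = 6 * (C4 * d powr \<theta>') + 5 * ((E0 + C3) * d powr \<theta>') + (2 * c * Dm powr t + 1) * d powr \<theta>'"
              unfolding C_def by (simp add: algebra_simps)
            then show ?thesis using z by linarith
          qed
          finally have 2: "6 * (real N * \<delta>) + 5 * E \<le> C * dist l l' powr \<theta>'" unfolding d_def .
          show "h l x / h l' x \<le> exp (C * dist l l' powr \<theta>')"
          proof -
            have "exp (real 6 * (real N * \<delta>) + real 5 * E) \<le> exp (C * dist l l' powr \<theta>')" using 2 by simp
            then show ?thesis using 1 expbd[of 6 5] by linarith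
          qed
        qed
        have part2: "\<forall>w\<in>words m. measure (\<nu> l) (cyl m w) / measure (\<nu> l') (cyl m w)
                   \<le> exp (C * dist l l' powr \<theta>' * real (length w))"
        proof
          fix w assume w: "w \<in> words m"
          show "measure (\<nu> l) (cyl m w) / measure (\<nu> l') (cyl m w) \<le> exp (C * dist l l' powr \<theta>' * real (length w))"
          proof (cases "w = []")
            case True
            have "cyl m [] = space (\<nu> l)" "cyl m [] = space (\<nu> l')" using spl[OF lc] spl[OF l'c] by (auto simp: cyl_def)
            then have "measure (\<nu> l) (cyl m w) = 1" "measure (\<nu> l') (cyl m w) = 1"
              using True prob_space.prob_space[OF \<nu>_prob[OF lc]] prob_space.prob_space[OF \<nu>_prob[OF l'c]] by auto
            then show ?thesis using True by simp
          next
            case False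
            define n where "n = length w"
            have n1: "1 \<le> real n" using False unfolding n_def by (cases w) auto
            have "measure (\<nu> l) (cyl m w) \<le> exp (real (length w) * (c * dist l l' powr \<theta>)) ^ 2 * (X ^ 4 * Qv ^ 4) * measure (\<nu> l') (cyl m w)"
            proof (rule P.cyl_ratio[OF clos _ w])
              have "0 \<le> X ^ 4" "0 \<le> Qv ^ 4" using X Qv by simp_all
              then show "0 \<le> X ^ 4 * Qv ^ 4" by (rule mult_nonneg_nonneg)
            qed
            also have "\<dots> = (exp (real n * \<delta>) ^ 2 * X ^ 4 * Qv ^ 4) * measure (\<nu> l') (cyl m w)"
              unfolding deq n_def by (simp add: mult_ac)
            finally have 1: "measure (\<nu> l) (cyl m w) \<le> (exp (real n * \<delta>) ^ 2 * X ^ 4 * Qv ^ 4) * measure (\<nu> l') (cyl m w)" .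
            have 2: "exp (real n * \<delta>) ^ 2 * X ^ 4 * Qv ^ 4 \<le> exp (2 * (real n * \<delta>) + 4 * (real N * \<delta>) + 4 * E)"
            proof -
              have "exp (real n * \<delta>) ^ 2 = exp (2 * (real n * \<delta>))" by (simp add: exp_of_nat_mult[symmetric])
              moreover have "X ^ 4 * Qv ^ 4 \<le> exp (4 * (real N * \<delta>) + 4 * E)" using expbd[of 4 4] by simp
              ultimately have "exp (real n * \<delta>) ^ 2 * X ^ 4 * Qv ^ 4 \<le> exp (2 * (real n * \<delta>)) * exp (4 * (real N * \<delta>) + 4 * E)"
                by (simp add: mult.assoc mult_left_mono)
              then show ?thesis by (simp add: exp_add[symmetric] add.assoc)
            qed
            have 3: "2 * (real n * \<delta>) + 4 * (real N * \<delta>) + 4 * E \<le> C * dist l l' powr \<theta>' * real n"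
            proof -
              have a: "real n * \<delta> \<le> real n * (c * (Dm powr t * d powr \<theta>'))"
                unfolding \<delta>_def using dth H2_const by (intro mult_left_mono) auto
              have b: "4 * (real N * \<delta>) + 4 * E \<le> (4 * C4 + 4 * (E0 + C3)) * d powr \<theta>'"
                using Nd Ebound by (simp add: algebra_simps)
              have c0: "0 \<le> (4 * C4 + 4 * (E0 + C3)) * d powr \<theta>'" using C4 E0 C3 dpos by simp
              have "(4 * C4 + 4 * (E0 + C3)) * d powr \<theta>' \<le> (4 * C4 + 4 * (E0 + C3)) * d powr \<theta>' * real n"
                using c0 n1 by (simp add: mult_le_cancel_left1 mult_right_mono) 
              then have "2 * (real n * \<delta>) + 4 * (real N * \<delta>) + 4 * E
                  \<le> (2 * c * Dm powr t + 4 * C4 + 4 * (E0 + C3)) * d powr \<theta>' * real n"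
                using a b by (simp add: algebra_simps)
              also have "\<dots> \<le> C * d powr \<theta>' * real n"
                unfolding C_def using dpos n1 C4 E0 C3 by (intro mult_right_mono) auto
              finally show ?thesis unfolding d_def .
            qed
            have "measure (\<nu> l) (cyl m w) / measure (\<nu> l') (cyl m w) \<le> exp (C * dist l l' powr \<theta>' * real n)"
            proof (cases "measure (\<nu> l') (cyl m w) = 0")
              case True then show ?thesis by simp
            next
              case False
              then have mp: "0 < measure (\<nu> l') (cyl m w)" using measure_nonneg[of "\<nu> l'" "cyl m w"] by linarith
              have "measure (\<nu> l) (cyl m w) / measure (\<nu> l') (cyl m w) \<le> exp (real n * \<delta>) ^ 2 * X ^ 4 * Qv ^ 4"
                using 1 mp by (simp add: divide_le_eq)
              also have "\<dots> \<le> exp (C * dist l l' powr \<theta>' * real n)" using 2 3 by (meson exp_le_cancel_iff order_trans)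
              finally show ?thesis .
            qed
            then show ?thesis unfolding n_def .
          qed
        qed
        show ?thesis using part1 part2 by blast
      qed
    qed
  qed
qed

end
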